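(* The CDG discretization operator $\mathcal{H}$ is approximately skew-symmetric: for all $\boldsymbol{h}=(h_1,h_2)$, $\boldsymbol{g}=(g_1,g_2)\in V_h\times W_h$, \begin{equation*} \mathcal{H}(\boldsymbol{h},\boldsymbol{g})+\mathcal{H}(\boldsymbol{g},\boldsymbol{h}) = -\frac{2}{\tau_{\rm max}}\int_{\Omega}(h_1-h_2)(g_1-g_2)\,\mathrm{d}\boldsymbol{x}. \end{equation*}
   Context: Setting: linear flux, periodic boundary conditions. In 1D, $f(u)=\beta_1 u$ with constant $\beta_1$, on $\Omega=[x_{\min},x_{\max}]$ with a quasi-uniform primal mesh $\mathcal{T}_h^C=\{[x_{i-\frac12},x_{i+\frac12}]\}$, cell centers $x_i=\frac12(x_{i-\frac12}+x_{i+\frac12})$, and dual mesh $\mathcal{T}_h^D=\{[x_i,x_{i+1}]\}$. In 2D, $\boldsymbol{f}(u)=(\beta_1 u,\beta_2 u)$ with constants $\beta_1,\beta_2$, on a rectangle with uniform Cartesian primal mesh cells $[x_{i-\frac12},x_{i+\frac12}]\times[y_{j-\frac12},y_{j+\frac12}]$ and dual mesh cells $[x_i,x_{i+1}]\times[y_j,y_{j+1}]$. $V_h$ (resp. $W_h$) is the space of $L^2$ functions that are polynomials of degree at most $k$ on each primal (resp. dual) cell. $\tau_{\max}>0$ is a fixed constant (the maximum stable time step). The 1D CDG operator is \begin{equation*} \begin{aligned} \mathcal{H}(\boldsymbol{u},\boldsymbol{\phi}) = &-\frac{1}{\tau_{\max }} \int_{\Omega}(u_1-u_2)(\phi_1-\phi_2)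 \,\mathrm{d}x +\int_{\Omega} f(u_2)\partial_x\phi_1+ f(u_1)\partial_x\phi_2\,\mathrm{d}x\\ &-\sum_{i} \Big(f(u_2)_{i+\frac{1}{2}}(\phi_1)_{i+\frac{1}{2}}^--f(u_2)_{i-\frac{1}{2}}(\phi_1)_{i-\frac{1}{2}}^+ +f(u_1)_{i+1}(\phi_2)_{i+1}^--f(u_1)_{i}(\phi_2)_{i}^+ \Big), \end{aligned} \end{equation*} where $(\phi_1)_{i+\frac12}^{\pm}=\lim_{\epsilon\to0^+}\phi_1(x_{i+\frac12}\pm\epsilon)$ and similarly $(\phi_2)_i^{\pm}$ (note $u_2$ is continuous at $x_{i\pm\frac12}$ and $u_1$ is continuous at $x_i$). The 2D CDG operator is \begin{equation*} \begin{aligned} \mathcal{H}(\boldsymbol{u},\boldsymbol{\phi}) = &-\frac{1}{\tau_{\max }} \int_{\Omega}(u_1-u_2)(\phi_1-\phi_2) \,\mathrm{d} \boldsymbol{x} +\int_{\Omega} \boldsymbol{f}(u_2) \cdot \nabla \phi_1+ \boldsymbol{f}(u_1)\cdot \nabla \phi_2\,\mathrm{d}\boldsymbol{x}\\ &-\sum_{i,j} \bigg(\int_{x_{i-\frac{1}{2}}}^{x_{i+\frac{1}{2}}} f_2(u_2(x,y_{j+\frac{1}{2}}))(\phi_1)_{j+\frac{1}{2}}^{-} -f_2(u_2(x,y_{j-\frac{1}{2}}))(\phi_1)_{j-\frac{1}{2}}^{+} \,\mathrm{d}x +\int_{y_{j-\frac{1}{2}}}^{y_{j+\frac{1}{2}}}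 f_1(u_2(x_{i+\frac{1}{2}},y))(\phi_1)_{i+\frac{1}{2}}^{-} -f_1(u_2(x_{i-\frac{1}{2}},y))(\phi_1)_{i-\frac{1}{2}}^{+} \,\mathrm{d}y\\ &\qquad+\int_{x_i}^{x_{i+1}} f_2(u_1(x,y_{j+1}))(\phi_2)_{j+1}^{-} -f_2(u_1(x,y_{j}))(\phi_2)_{j}^{+} \,\mathrm{d}x +\int_{y_j}^{y_{j+1}} f_1(u_1(x_{i+1},y))(\phi_2)_{i+1}^{-} -f_1(u_1(x_{i},y))(\phi_2)_{i}^{+} \,\mathrm{d}y\bigg), \end{aligned} \end{equation*} with $\boldsymbol{f}=(f_1,f_2)$ and one-sided traces in $x$ (subscripts $i\pm\frac12$, $i$) or $y$ (subscripts $j\pm\frac12$, $j$) defined analogously. *)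

theory Defs
  imports "HOL-Analysis.Analysis" "HOL-Computational_Algebra.Polynomial"
begin

text \<open>A 1D primal mesh is given by its N+1 nodes xb 0 < xb 1 < ... < xb N,
  xb i standing for x_{i-1/2}; Omega = [xb 0, xb N], L = xb N - xb 0.\<close>

definition cc :: "(nat \<Rightarrow> real) \<Rightarrow> nat \<Rightarrow> real" where
  "cc xb i = (xb i + xb (Suc i)) / 2"

text \<open>Dual nodes x_0,...,x_N with the periodic convention x_N = x_0 + L.\<close>
definition dn :: "(nat \<Rightarrow> real) \<Rightarrow> nat \<Rightarrow> nat \<Rightarrow> real" where
  "dn xb N i = (if i < N then cc xb i else cc xb 0 + (xb N - xb 0))"

definition pidx :: "(nat \<Rightarrow> real) \<Rightarrow> nat \<Rightarrow> real \<Rightarrow> nat" where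
  "pidx xb N x = card {i. 1 \<le> i \<and> i < N \<and> xb i \<le> x}"

text \<open>Index of the (periodic) dual cell containing x; the last dual cell
  [x_{N-1}, x_0 + L] wraps around, covering [x_{N-1}, xmax] and [xmin, x_0).\<close>
definition didx :: "(nat \<Rightarrow> real) \<Rightarrow> nat \<Rightarrow> real \<Rightarrow> nat" where
  "didx xb N x = (if x < cc xb 0 then N - 1 else card {i. 1 \<le> i \<and> i < N \<and> cc xb i \<le> x})"

text \<open>Local coordinate of x inside its dual cell (shift by L on the wrapped part).\<close>
definition dsh :: "(nat \<Rightarrow> real) \<Rightarrow> nat \<Rightarrow> real \<Rightarrow> real" where
  "dsh xb N x = (if x < cc xb 0 then x + (xb N - xb 0) else x)"

definition per :: "(nat \<Rightarrow> real) \<Rightarrow> nat \<Rightarrow> real \<Rightarrow> real" where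
  "per xb N x = (if xb N < x then x - (xb N - xb 0) else x)"

text \<open>An element of V_h is given by one polynomial per primal cell, an element of
  W_h by one polynomial per dual cell (in the local coordinate of that cell).\<close>
definition Vh1 :: "(nat \<Rightarrow> real) \<Rightarrow> nat \<Rightarrow> (nat \<Rightarrow> real poly) \<Rightarrow> real \<Rightarrow> real" where
  "Vh1 xb N p x = poly (p (pidx xb N x)) x"

definition Wh1 :: "(nat \<Rightarrow> real) \<Rightarrow> nat \<Rightarrow> (nat \<Rightarrow> real poly) \<Rightarrow> real \<Rightarrow> real" where
  "Wh1 xb N q x = poly (q (didx xb N x)) (dsh xb N x)"

definition H1 :: "real \<Rightarrow> real \<Rightarrow> (nat \<Rightarrow> real) \<Rightarrow> nat \<Rightarrow>
    (nat \<Rightarrow> real poly) \<times> (nat \<Rightarrow> real poly) \<Rightarrow> (nat \<Rightarrow> real poly) \<times> (nat \<Rightarrow> real poly) \<Rightarrow> real" where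
  "H1 \<beta> \<tau> xb N u \<phi> = (case u of (p, q) \<Rightarrow> case \<phi> of (r, s) \<Rightarrow>
     - (1 / \<tau>) * integral {xb 0..xb N}
         (\<lambda>x. (Vh1 xb N p x - Wh1 xb N q x) * (Vh1 xb N r x - Wh1 xb N s x))
     + integral {xb 0..xb N}
         (\<lambda>x. \<beta> * Wh1 xb N q x * Vh1 xb N (\<lambda>i. pderiv (r i)) x
             + \<beta> * Vh1 xb N p x * Wh1 xb N (\<lambda>i. pderiv (s i)) x)
     - (\<Sum>i<N. \<beta> * Wh1 xb N q (xb (Suc i)) * poly (r i) (xb (Suc i))
              - \<beta> * Wh1 xb N q (xb i) * poly (r i) (xb i)
              + \<beta> * Vh1 xb N p (per xb N (dn xb N (Suc i))) * poly (s i) (dn xb N (Suc i))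
              - \<beta> * Vh1 xb N p (per xb N (dn xb N i)) * poly (s i) (dn xb N i)))"

definition poly2 :: "nat \<Rightarrow> (nat \<Rightarrow> nat \<Rightarrow> real) \<Rightarrow> real \<Rightarrow> real \<Rightarrow> real" where
  "poly2 k c x y = (\<Sum>a\<le>k. \<Sum>b\<le>k - a. c a b * x ^ a * y ^ b)"

definition poly2_dx :: "nat \<Rightarrow> (nat \<Rightarrow> nat \<Rightarrow> real) \<Rightarrow> real \<Rightarrow> real \<Rightarrow> real" where
  "poly2_dx k c x y = (\<Sum>a\<le>k. \<Sum>b\<le>k - a. c a b * (real a * x ^ (a - 1)) * y ^ b)"

definition poly2_dy :: "nat \<Rightarrow> (nat \<Rightarrow> nat \<Rightarrow> real) \<Rightarrow> real \<Rightarrow> real \<Rightarrow> real" where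
  "poly2_dy k c x y = (\<Sum>a\<le>k. \<Sum>b\<le>k - a. c a b * x ^ a * (real b * y ^ (b - 1)))"

definition umesh :: "real \<Rightarrow> real \<Rightarrow> nat \<Rightarrow> nat \<Rightarrow> real" where
  "umesh a b N i = a + real i * (b - a) / real N"

type_synonym coeffs = "nat \<Rightarrow> nat \<Rightarrow> real"
type_synonym evaluator = "coeffs \<Rightarrow> real \<Rightarrow> real \<Rightarrow> real"

definition V2 :: "evaluator \<Rightarrow> (nat \<Rightarrow> real) \<Rightarrow> nat \<Rightarrow> (nat \<Rightarrow> real) \<Rightarrow> nat \<Rightarrow>
    (nat \<Rightarrow> nat \<Rightarrow> coeffs) \<Rightarrow> real \<Rightarrow> real \<Rightarrow> real" where
  "V2 ev xb Nx yb Ny c x y = ev (c (pidx xb Nx x) (pidx yb Ny y)) x y"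

definition W2 :: "evaluator \<Rightarrow> (nat \<Rightarrow> real) \<Rightarrow> nat \<Rightarrow> (nat \<Rightarrow> real) \<Rightarrow> nat \<Rightarrow>
    (nat \<Rightarrow> nat \<Rightarrow> coeffs) \<Rightarrow> real \<Rightarrow> real \<Rightarrow> real" where
  "W2 ev xb Nx yb Ny d x y = ev (d (didx xb Nx x) (didx yb Ny y)) (dsh xb Nx x) (dsh yb Ny y)"

definition H2 :: "nat \<Rightarrow> real \<Rightarrow> real \<Rightarrow> real \<Rightarrow> (nat \<Rightarrow> real) \<Rightarrow> nat \<Rightarrow> (nat \<Rightarrow> real) \<Rightarrow> nat \<Rightarrow>
    (nat \<Rightarrow> nat \<Rightarrow> coeffs) \<times> (nat \<Rightarrow> nat \<Rightarrow> coeffs) \<Rightarrow>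
    (nat \<Rightarrow> nat \<Rightarrow> coeffs) \<times> (nat \<Rightarrow> nat \<Rightarrow> coeffs) \<Rightarrow> real" where
  "H2 k \<beta>1 \<beta>2 \<tau> xb Nx yb Ny u \<phi> = (case u of (u1, u2) \<Rightarrow> case \<phi> of (\<phi>1, \<phi>2) \<Rightarrow>
    let P = poly2 k; Px = poly2_dx k; Py = poly2_dy k;
        V = (\<lambda>ev c. V2 ev xb Nx yb Ny c); W = (\<lambda>ev d. W2 ev xb Nx yb Ny d);
        px = per xb Nx; py = per yb Ny; dx = dn xb Nx; dy = dn yb Ny
    in
     - (1 / \<tau>) * integral ({xb 0..xb Nx} \<times> {yb 0..yb Ny})
         (\<lambda>(x, y). (V P u1 x y - W P u2 x y) * (V P \<phi>1 x y - W P \<phi>2 x y))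
     + integral ({xb 0..xb Nx} \<times> {yb 0..yb Ny})
         (\<lambda>(x, y). \<beta>1 * W P u2 x y * V Px \<phi>1 x y + \<beta>2 * W P u2 x y * V Py \<phi>1 x y
                 + \<beta>1 * V P u1 x y * W Px \<phi>2 x y + \<beta>2 * V P u1 x y * W Py \<phi>2 x y)
     - (\<Sum>i<Nx. \<Sum>j<Ny.
          integral {xb i..xb (Suc i)}
            (\<lambda>x. \<beta>2 * W P u2 x (yb (Suc j)) * P (\<phi>1 i j) x (yb (Suc j))
                - \<beta>2 * W P u2 x (yb j) * P (\<phi>1 i j) x (yb j))
        + integral {yb j..yb (Suc j)}
            (\<lambda>y. \<beta>1 * W P u2 (xb (Suc i)) y * P (\<phi>1 i j) (xb (Suc i)) y
                - \<beta>1 * W P u2 (xb i) y * P (\<phi>1 i j) (xb i) y)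
        + integral {dx i..dx (Suc i)}
            (\<lambda>x. \<beta>2 * V P u1 (px x) (py (dy (Suc j))) * P (\<phi>2 i j) x (dy (Suc j))
                - \<beta>2 * V P u1 (px x) (py (dy j)) * P (\<phi>2 i j) x (dy j))
        + integral {dy j..dy (Suc j)}
            (\<lambda>y. \<beta>1 * V P u1 (px (dx (Suc i))) (py y) * P (\<phi>2 i j) (dx (Suc i)) y
                - \<beta>1 * V P u1 (px (dx i)) (py y) * P (\<phi>2 i j) (dx i) y)))"

end

theory Submission
  imports Defs
begin

definition mesh :: "(nat \<Rightarrow> real) \<Rightarrow> nat \<Rightarrow> bool" where
  "mesh xb N \<longleftrightarrow> 1 \<le> N \<and> (\<forall>i<N. xb i < xb (Suc i))"

lemma mesh_lt: assumes "mesh xb N" "i < j" "j \<le> N" shows "xb i < xb j"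
  using assms(2,3)
proof (induction j)
  case 0 then show ?case by simp
next
  case (Suc j)
  have s: "xb j < xb (Suc j)" using assms(1) Suc.prems by (simp add: mesh_def)
  show ?case
  proof (cases "i = j")
    case True then show ?thesis using s by simp
  next
    case False then have "xb i < xb j" using Suc by simp
    then show ?thesis using s by simp
  qed
qed

lemma mesh_le: assumes "mesh xb N" "i \<le> j" "j \<le> N" shows "xb i \<le> xb j"
  using mesh_lt[OF assms(1)] assms(2,3) by (cases "i = j") (auto simp: le_less)

lemma cc_bounds: assumes "mesh xb N" "i < N" shows "xb i < cc xb i" "cc xb i < xb (Suc i)"
  using assms by (auto simp: cc_def mesh_def)

lemma cc_lt: assumes "mesh xb N" "i < j" "j < N" shows "cc xb i < cc xb j"
proof -
  have "cc xb i < xb (Suc i)" using cc_bounds assms by simp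
  also have "xb (Suc i) \<le> xb j" using mesh_le assms by simp
  also have "xb j < cc xb j" using cc_bounds assms by simp
  finally show ?thesis .
qed

lemma card_idx:
  fixes f :: "nat \<Rightarrow> real"
  assumes mono: "\<And>l l'. l < l' \<Longrightarrow> l' < N \<Longrightarrow> f l < f l'"
    and "i < N" "f i \<le> x" "Suc i < N \<Longrightarrow> x < f (Suc i)"
  shows "card {l. 1 \<le> l \<and> l < N \<and> f l \<le> x} = i"
proof -
  have "{l. 1 \<le> l \<and> l < N \<and> f l \<le> x} = {1..i}"
  proof (intro set_eqI iffI)
    fix l assume l: "l \<in> {l. 1 \<le> l \<and> l < N \<and> f l \<le> x}"
    show "l \<in> {1..i}"
    proof (rule ccontr)
      assume "l \<notin> {1..i}"
      then have "Suc i \<le> l" using l by auto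
      then have "f (Suc i) \<le> f l" using mono l by (cases "Suc i = l") (auto intro: less_imp_le)
      moreover have "x < f (Suc i)" using assms(4) \<open>Suc i \<le> l\<close> l by auto
      ultimately show False using l by auto
    qed
  next
    fix l assume l: "l \<in> {1..i}"
    then have "f l \<le> f i" using mono assms(2) by (cases "l = i") (auto intro: less_imp_le)
    then show "l \<in> {l. 1 \<le> l \<and> l < N \<and> f l \<le> x}" using l assms by auto
  qed
  then show ?thesis by simp
qed

lemma pidx_eq: assumes "mesh xb N" "i < N" "xb i \<le> x" "Suc i < N \<Longrightarrow> x < xb (Suc i)"
  shows "pidx xb N x = i"
  unfolding pidx_def
  by (rule card_idx[OF _ assms(2-4)]) (use mesh_lt[OF assms(1)] in auto)

lemma didx_eq: assumes "mesh xb N" "i < N" "cc xb i \<le> x" "Suc i < N \<Longrightarrow> x < cc xb (Suc i)"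
  shows "didx xb N x = i" "dsh xb N x = x"
proof -
  have "cc xb 0 \<le> cc xb i" using cc_lt[OF assms(1), of 0 i] assms(2) by (cases i) auto
  then have "\<not> x < cc xb 0" using assms(3) by simp
  then show "didx xb N x = i" "dsh xb N x = x"
    unfolding didx_def dsh_def
    using card_idx[OF _ assms(2-4)] cc_lt[OF assms(1)] by auto
qed

lemma didx_wrap: "x < cc xb 0 \<Longrightarrow> didx xb N x = N - 1 \<and> dsh xb N x = x + (xb N - xb 0)"
  by (simp add: didx_def dsh_def)

definition rm :: "(nat \<Rightarrow> real) \<Rightarrow> nat \<Rightarrow> real" where
  "rm xb m = (if even m then xb (m div 2) else cc xb (m div 2))"

definition dI :: "nat \<Rightarrow> nat \<Rightarrow> nat" where
  "dI N m = (if odd m then m div 2 else if m = 0 then N - 1 else m div 2 - 1)"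

definition dS :: "(nat \<Rightarrow> real) \<Rightarrow> nat \<Rightarrow> nat \<Rightarrow> real" where
  "dS xb N m = (if m = 0 then xb N - xb 0 else 0)"

lemma rm_even[simp]: "rm xb (2 * i) = xb i" by (simp add: rm_def)
lemma rm_odd[simp]: "rm xb (Suc (2 * i)) = cc xb i" by (simp add: rm_def)
lemma rm_0[simp]: "rm xb 0 = xb 0" by (simp add: rm_def)

lemma rm_step: assumes "mesh xb N" "m < 2 * N" shows "rm xb m < rm xb (Suc m)"
proof (cases "even m")
  case True then obtain i where m: "m = 2 * i" by auto
  then have "rm xb (Suc m) = cc xb i" by simp
  then show ?thesis using cc_bounds[OF assms(1), of i] m assms(2) by simp
next
  case False then obtain i where m: "m = Suc (2 * i)" by (metis oddE Suc_eq_plus1)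
  then have "Suc m = 2 * Suc i" by simp
  then have "rm xb (Suc m) = xb (Suc i)" by (metis rm_even)
  then show ?thesis using cc_bounds[OF assms(1), of i] m assms(2) by simp
qed

lemma rm_mono: assumes "mesh xb N" shows "\<forall>m<2*N. rm xb m \<le> rm xb (Suc m)"
  using rm_step[OF assms] by (simp add: less_imp_le)

lemma piece_info:
  assumes "mesh xb N" "m < 2 * N" "rm xb m < x" "x < rm xb (Suc m)"
  shows "pidx xb N x = m div 2" "didx xb N x = dI N m" "dsh xb N x = x + dS xb N m"
proof -
  have N: "1 \<le> N" using assms(1) by (simp add: mesh_def)
  have "pidx xb N x = m div 2 \<and> didx xb N x = dI N m \<and> dsh xb N x = x + dS xb N m"
  proof (cases "even m")
    case True then obtain i where m: "m = 2 * i" by auto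
    have iN: "i < N" using m assms(2) by simp
    have x1: "xb i < x" "x < cc xb i" using assms(3,4) m by auto
    have cb: "xb i < cc xb i" "cc xb i < xb (Suc i)" using cc_bounds[OF assms(1) iN] by auto
    have p: "pidx xb N x = i" by (rule pidx_eq[OF assms(1) iN]) (use x1 cb in auto)
    show ?thesis
    proof (cases "i = 0")
      case True
      then show ?thesis using p didx_wrap[of x xb N] x1 m by (simp add: dI_def dS_def)
    next
      case False
      then obtain j where ij: "i = Suc j" by (cases i) auto
      have "cc xb j < xb i" using cc_bounds[OF assms(1), of j] ij iN by simp
      then have "didx xb N x = j" "dsh xb N x = x"
        using didx_eq[OF assms(1), of j x] ij iN x1 by auto
      then show ?thesis using p m ij by (simp add: dI_def dS_def)
    qed
  next
    case False then obtain i where m: "m = Suc (2 * i)" by (metis oddE Suc_eq_plus1)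
    have iN: "i < N" using m assms(2) by simp
    have x1: "cc xb i < x" "x < xb (Suc i)" using assms(3,4) m
      by (auto simp del: rm_even simp add: rm_def)
    have cb: "xb i < cc xb i" "cc xb i < xb (Suc i)" using cc_bounds[OF assms(1) iN] by auto
    have p: "pidx xb N x = i" by (rule pidx_eq[OF assms(1) iN]) (use x1 cb in auto)
    have "Suc i < N \<Longrightarrow> xb (Suc i) < cc xb (Suc i)" using cc_bounds[OF assms(1)] by auto
    then have lt: "Suc i < N \<Longrightarrow> x < cc xb (Suc i)" using x1 by auto
    have "didx xb N x = i" "dsh xb N x = x"
      using didx_eq[OF assms(1) iN _ lt] x1 by auto
    then show ?thesis using p m by (simp add: dI_def dS_def)
  qed
  then show "pidx xb N x = m div 2" "didx xb N x = dI N m" "dsh xb N x = x + dS xb N m" by auto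
qed

definition pwc :: "(nat \<Rightarrow> real) \<Rightarrow> nat \<Rightarrow> (real \<Rightarrow> real) \<Rightarrow> bool" where
  "pwc t M f \<longleftrightarrow> (\<forall>m<M. \<exists>g. continuous_on {t m..t (Suc m)} g \<and>
      (\<forall>x. t m < x \<longrightarrow> x < t (Suc m) \<longrightarrow> f x = g x))"

lemma piece_has_integral:
  fixes f g :: "real \<Rightarrow> real"
  assumes "a \<le> b" "continuous_on {a..b} g" "\<And>x. a < x \<Longrightarrow> x < b \<Longrightarrow> f x = g x"
  shows "(f has_integral integral {a..b} g) {a..b}"
proof -
  have "(g has_integral integral {a..b} g) {a..b}"
    using integrable_continuous_real[OF assms(2)] by (simp add: has_integral_integral)
  then show ?thesis
    using has_integral_spike_finite[of "{a,b}" "{a..b}" f g] assms by auto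
qed

lemma pwc_piece:
  assumes "pwc t M f" "m < M" "t m \<le> t (Suc m)"
  shows "f integrable_on {t m..t (Suc m)}"
  using assms piece_has_integral unfolding pwc_def integrable_on_def by metis

lemma combine_pieces:
  fixes f :: "real \<Rightarrow> real"
  assumes "\<forall>m<M. t m \<le> t (Suc m)" "\<And>m. m < M \<Longrightarrow> (f has_integral I m) {t m..t (Suc m)}"
  shows "(f has_integral (\<Sum>m<M. I m)) {t 0..t M}"
  using assms
proof (induction M)
  case 0 then show ?case by (simp add: has_integral_refl)
next
  case (Suc M)
  have le: "t 0 \<le> t M" using Suc.prems(1)
  proof (induction M)
    case 0 then show ?case by simp
  next
    case (Suc M) then show ?case by (metis less_SucI order.trans lessI)
  qed
  show ?case
    using has_integral_combine[OF le _ Suc.IH Suc.prems(2)] Suc.prems by simp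
qed

lemma pwc_has_integral:
  assumes "\<forall>m<M. t m \<le> t (Suc m)" "pwc t M f"
  shows "(f has_integral (\<Sum>m<M. integral {t m..t (Suc m)} f)) {t 0..t M}"
  by (rule combine_pieces[OF assms(1)]) (use pwc_piece[OF assms(2)] assms(1) in auto)

lemma pwc_integrable:
  assumes "\<forall>m<M. t m \<le> t (Suc m)" "pwc t M f"
  shows "f integrable_on {t 0..t M}"
  using pwc_has_integral[OF assms] by blast

lemma pwc_rm:
  assumes "mesh xb N" "\<And>i d c. continuous_on UNIV (\<lambda>x. h i d (x + c) x)"
  shows "pwc (rm xb) (2 * N) (\<lambda>x. h (pidx xb N x) (didx xb N x) (dsh xb N x) x)"
  unfolding pwc_def
proof (intro allI impI)
  fix m assume m: "m < 2 * N"
  show "\<exists>g. continuous_on {rm xb m..rm xb (Suc m)} g \<and>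
      (\<forall>x. rm xb m < x \<longrightarrow> x < rm xb (Suc m) \<longrightarrow>
        h (pidx xb N x) (didx xb N x) (dsh xb N x) x = g x)"
    by (rule exI[of _ "\<lambda>x. h (m div 2) (dI N m) (x + dS xb N m) x"])
       (use piece_info[OF assms(1) m] continuous_on_subset[OF assms(2)] in auto)
qed

lemma sum_even_odd: "(\<Sum>m<2*N. f m) = (\<Sum>i<N. f (2*i) + f (Suc (2*i)))"
  by (induction N) (simp_all add: sum.distrib ac_simps)

lemma sum_rot: "1 \<le> N \<Longrightarrow> (\<Sum>j<N. (if Suc j < N then D (Suc j) else D 0)) = (\<Sum>i<N. D i)"
proof -
  assume "1 \<le> N"
  then obtain n where N: "N = Suc n" by (cases N) auto
  have "(\<Sum>j<Suc n. (if Suc j < Suc n then D (Suc j) else D 0)) = (\<Sum>j<n. D (Suc j)) + D 0"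
    by (simp add: sum.lessThan_Suc)
  also have "\<dots> = (\<Sum>i<Suc n. D i)" by (subst sum.lessThan_Suc_shift) (simp add: add.commute)
  finally show ?thesis using N by simp
qed

lemma rm_even2[simp]: "rm xb (Suc (Suc (2 * i))) = xb (Suc i)"
  using rm_even[of xb "Suc i"] by simp
lemma dI_odd[simp]: "dI N (Suc (2 * i)) = i" by (simp add: dI_def)
lemma dI_even_Suc[simp]: "dI N (2 * Suc j) = j" by (simp add: dI_def)
lemma dI_even_SS[simp]: "dI N (Suc (Suc (2 * j))) = j" by (simp add: dI_def)
lemma dI_0[simp]: "dI N 0 = N - 1" by (simp add: dI_def)
lemma dS_Suc[simp]: "dS xb N (Suc m) = 0" by (simp add: dS_def)
lemma dS_0[simp]: "dS xb N 0 = xb N - xb 0" by (simp add: dS_def)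
lemma dS_even_Suc[simp]: "dS xb N (2 * Suc j) = 0" by (simp add: dS_def)

lemma cont_shift: "continuous_on UNIV f \<Longrightarrow> continuous_on UNIV (\<lambda>x::real. f (x + c))"
  by (rule continuous_on_compose2[of UNIV f]) (auto intro!: continuous_intros)

lemma deriv_cont: "(\<And>x. (f has_real_derivative f' x) (at x)) \<Longrightarrow> continuous_on UNIV f"
  by (metis DERIV_isCont continuous_at_imp_continuous_on)

lemma mesh_N: "mesh xb N \<Longrightarrow> 1 \<le> N" by (simp add: mesh_def)

lemma W_at_xb_Suc: assumes "mesh xb N" "i < N"
  shows "didx xb N (xb (Suc i)) = i" "dsh xb N (xb (Suc i)) = xb (Suc i)"
proof -
  have "Suc i < N \<Longrightarrow> xb (Suc i) < cc xb (Suc i)" using cc_bounds[OF assms(1)] by auto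
  moreover have "cc xb i \<le> xb (Suc i)" using cc_bounds[OF assms] by simp
  ultimately show "didx xb N (xb (Suc i)) = i" "dsh xb N (xb (Suc i)) = xb (Suc i)"
    using didx_eq[OF assms] by auto
qed

lemma W_at_xb: assumes "mesh xb N" "i < N"
  shows "didx xb N (xb i) = dI N (2 * i)" "dsh xb N (xb i) = xb i + dS xb N (2 * i)"
proof -
  have "didx xb N (xb i) = dI N (2 * i) \<and> dsh xb N (xb i) = xb i + dS xb N (2 * i)"
  proof (cases i)
    case 0
    then show ?thesis using cc_bounds[OF assms] didx_wrap[of "xb 0" xb N] by simp
  next
    case (Suc j)
    then show ?thesis using W_at_xb_Suc[OF assms(1), of j] assms(2) by (simp add: dI_def dS_def)
  qed
  then show "didx xb N (xb i) = dI N (2 * i)" "dsh xb N (xb i) = xb i + dS xb N (2 * i)" by auto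
qed

lemma per_dn: assumes "mesh xb N" "j < N" shows "per xb N (dn xb N j) = cc xb j" "pidx xb N (cc xb j) = j"
proof -
  have "cc xb j < xb (Suc j)" "xb (Suc j) \<le> xb N" using cc_bounds[OF assms] mesh_le[OF assms(1)] assms by auto
  then show "per xb N (dn xb N j) = cc xb j" using assms by (simp add: per_def dn_def)
  have "Suc j < N \<Longrightarrow> cc xb j < xb (Suc j)" using cc_bounds[OF assms] by simp
  then show "pidx xb N (cc xb j) = j" using pidx_eq[OF assms] cc_bounds[OF assms] by simp
qed

lemma per_dnN: assumes "mesh xb N" shows "per xb N (dn xb N N) = cc xb 0" "dn xb N N = cc xb 0 + (xb N - xb 0)"
proof -
  have "xb 0 < cc xb 0" using cc_bounds[OF assms, of 0] mesh_N[OF assms] by simp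
  then show "per xb N (dn xb N N) = cc xb 0" by (simp add: per_def dn_def)
  show "dn xb N N = cc xb 0 + (xb N - xb 0)" by (simp add: dn_def)
qed

lemma ibp1:
  fixes P P' Q Q' :: "nat \<Rightarrow> real \<Rightarrow> real"
  assumes ms: "mesh xb N"
    and dP: "\<And>i x. (P i has_real_derivative P' i x) (at x)"
    and dQ: "\<And>j x. (Q j has_real_derivative Q' j x) (at x)"
    and cP: "\<And>i. continuous_on UNIV (P' i)" and cQ: "\<And>j. continuous_on UNIV (Q' j)"
  shows "(\<lambda>x. Q (didx xb N x) (dsh xb N x) * P' (pidx xb N x) x) integrable_on {xb 0..xb N}"
    "(\<lambda>x. P (pidx xb N x) x * Q' (didx xb N x) (dsh xb N x)) integrable_on {xb 0..xb N}"
    "integral {xb 0..xb N} (\<lambda>x. Q (didx xb N x) (dsh xb N x) * P' (pidx xb N x) x)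
     + integral {xb 0..xb N} (\<lambda>x. P (pidx xb N x) x * Q' (didx xb N x) (dsh xb N x))
     = (\<Sum>i<N. Q (didx xb N (xb (Suc i))) (dsh xb N (xb (Suc i))) * P i (xb (Suc i))
             - Q (didx xb N (xb i)) (dsh xb N (xb i)) * P i (xb i))
     + (\<Sum>j<N. P (pidx xb N (per xb N (dn xb N (Suc j)))) (per xb N (dn xb N (Suc j))) * Q j (dn xb N (Suc j))
             - P (pidx xb N (per xb N (dn xb N j))) (per xb N (dn xb N j)) * Q j (dn xb N j))"
proof -
  have cPP: "\<And>i. continuous_on UNIV (P i)" using dP deriv_cont by blast
  have cQQ: "\<And>i. continuous_on UNIV (Q i)" using dQ deriv_cont by blast
  have rmN: "rm xb (2 * N) = xb N" by simp
  have mono: "\<forall>m<2*N. rm xb m \<le> rm xb (Suc m)" by (rule rm_mono[OF ms])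
  show int1: "(\<lambda>x. Q (didx xb N x) (dsh xb N x) * P' (pidx xb N x) x) integrable_on {xb 0..xb N}"
    using pwc_integrable[OF mono pwc_rm[OF ms, of "\<lambda>i d z x. Q d z * P' i x"]]
    by (simp add: continuous_on_mult cont_shift cQQ cP)
  show int2: "(\<lambda>x. P (pidx xb N x) x * Q' (didx xb N x) (dsh xb N x)) integrable_on {xb 0..xb N}"
    using pwc_integrable[OF mono pwc_rm[OF ms, of "\<lambda>i d z x. P i x * Q' d z"]]
    by (simp add: continuous_on_mult cont_shift cPP cQ)
  define S where "S = (\<lambda>x. Q (didx xb N x) (dsh xb N x) * P' (pidx xb N x) x
                       + P (pidx xb N x) x * Q' (didx xb N x) (dsh xb N x))"
  define G where "G = (\<lambda>m x. Q (dI N m) (x + dS xb N m) * P (m div 2) x)"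
  have piece: "(S has_integral (G m (rm xb (Suc m)) - G m (rm xb m))) {rm xb m..rm xb (Suc m)}"
    if m: "m < 2 * N" for m
  proof -
    have le: "rm xb m \<le> rm xb (Suc m)" using mono m by simp
    have cG: "continuous_on {rm xb m..rm xb (Suc m)} (G m)"
      unfolding G_def
      by (rule continuous_on_subset[of UNIV])
         (auto intro!: continuous_on_mult cont_shift cQQ cPP)
    have dG: "(G m has_vector_derivative
          (Q' (dI N m) (x + dS xb N m) * P (m div 2) x + Q (dI N m) (x + dS xb N m) * P' (m div 2) x)) (at x)"
      for x
    proof -
      have d1: "((\<lambda>x. Q (dI N m) (x + dS xb N m)) has_real_derivative Q' (dI N m) (x + dS xb N m)) (at x)"
        using dQ[of "dI N m" "x + dS xb N m"] by (simp add: DERIV_shift)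
      have "(G m has_real_derivative
          (Q' (dI N m) (x + dS xb N m) * P (m div 2) x + P' (m div 2) x * Q (dI N m) (x + dS xb N m))) (at x)"
        unfolding G_def by (rule DERIV_mult[OF d1 dP])
      then show ?thesis by (simp add: has_real_derivative_iff_has_vector_derivative[symmetric] mult.commute)
    qed
    have ftc: "((\<lambda>x. Q' (dI N m) (x + dS xb N m) * P (m div 2) x + Q (dI N m) (x + dS xb N m) * P' (m div 2) x)
        has_integral (G m (rm xb (Suc m)) - G m (rm xb m))) {rm xb m..rm xb (Suc m)}"
      by (rule fundamental_theorem_of_calculus_interior[OF le cG dG])
    show ?thesis
      by (rule has_integral_spike_finite[of "{rm xb m, rm xb (Suc m)}", OF _ _ ftc])
         (auto simp: S_def piece_info[OF ms m] algebra_simps)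
  qed
  have hS: "(S has_integral (\<Sum>m<2*N. G m (rm xb (Suc m)) - G m (rm xb m))) {xb 0..xb N}"
    using combine_pieces[OF mono piece] rmN by simp
  have "integral {xb 0..xb N} (\<lambda>x. Q (didx xb N x) (dsh xb N x) * P' (pidx xb N x) x)
     + integral {xb 0..xb N} (\<lambda>x. P (pidx xb N x) x * Q' (didx xb N x) (dsh xb N x))
     = integral {xb 0..xb N} S"
    unfolding S_def by (rule integral_add[OF int1 int2, symmetric])
  also have "\<dots> = (\<Sum>m<2*N. G m (rm xb (Suc m)) - G m (rm xb m))"
    using hS by (rule integral_unique)
  also have "\<dots> = (\<Sum>i<N. G (2*i) (cc xb i) - G (2*i) (xb i) + (Q i (xb (Suc i)) * P i (xb (Suc i)) - Q i (cc xb i) * P i (cc xb i)))"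
    by (simp add: sum_even_odd G_def)
  also have "\<dots> = (\<Sum>i<N. Q (didx xb N (xb (Suc i))) (dsh xb N (xb (Suc i))) * P i (xb (Suc i))
             - Q (didx xb N (xb i)) (dsh xb N (xb i)) * P i (xb i))
     + (\<Sum>j<N. P (pidx xb N (per xb N (dn xb N (Suc j)))) (per xb N (dn xb N (Suc j))) * Q j (dn xb N (Suc j))
             - P (pidx xb N (per xb N (dn xb N j))) (per xb N (dn xb N j)) * Q j (dn xb N j))"
  proof -
    define D where "D = (\<lambda>i. G (2*i) (cc xb i))"
    have e1: "(\<Sum>i<N. Q (didx xb N (xb (Suc i))) (dsh xb N (xb (Suc i))) * P i (xb (Suc i))
             - Q (didx xb N (xb i)) (dsh xb N (xb i)) * P i (xb i))
           = (\<Sum>i<N. Q i (xb (Suc i)) * P i (xb (Suc i)) - G (2*i) (xb i))"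
      by (rule sum.cong) (auto simp: W_at_xb_Suc[OF ms] W_at_xb[OF ms] G_def)
    have e2: "P (pidx xb N (per xb N (dn xb N (Suc j)))) (per xb N (dn xb N (Suc j))) * Q j (dn xb N (Suc j))
           = (if Suc j < N then D (Suc j) else D 0)" if j: "j < N" for j
    proof (cases "Suc j < N")
      case True
      then show ?thesis using per_dn[OF ms True]
        by (simp add: D_def G_def dn_def)
    next
      case False
      then have "Suc j = N" "N - Suc 0 = j" using j by simp_all
      then show ?thesis using per_dnN[OF ms] per_dn[OF ms, of 0] mesh_N[OF ms] False
        by (simp add: D_def G_def)
    qed
    have e3: "P (pidx xb N (per xb N (dn xb N j))) (per xb N (dn xb N j)) * Q j (dn xb N j)
           = Q j (cc xb j) * P j (cc xb j)" if j: "j < N" for j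
      using per_dn[OF ms j] j by (simp add: dn_def)
    have "(\<Sum>j<N. P (pidx xb N (per xb N (dn xb N (Suc j)))) (per xb N (dn xb N (Suc j))) * Q j (dn xb N (Suc j))
             - P (pidx xb N (per xb N (dn xb N j))) (per xb N (dn xb N j)) * Q j (dn xb N j))
          = (\<Sum>j<N. (if Suc j < N then D (Suc j) else D 0)) - (\<Sum>j<N. Q j (cc xb j) * P j (cc xb j))"
      by (simp add: sum_subtractf e2 e3)
    also have "\<dots> = (\<Sum>j<N. D j) - (\<Sum>j<N. Q j (cc xb j) * P j (cc xb j))"
      using sum_rot[OF mesh_N[OF ms]] by simp
    finally have e4: "(\<Sum>j<N. P (pidx xb N (per xb N (dn xb N (Suc j)))) (per xb N (dn xb N (Suc j))) * Q j (dn xb N (Suc j))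
             - P (pidx xb N (per xb N (dn xb N j))) (per xb N (dn xb N j)) * Q j (dn xb N j))
          = (\<Sum>j<N. D j) - (\<Sum>j<N. Q j (cc xb j) * P j (cc xb j))" .
    show ?thesis unfolding e1 e4
      by (simp add: D_def sum_subtractf sum.distrib algebra_simps)
  qed
  finally show "integral {xb 0..xb N} (\<lambda>x. Q (didx xb N x) (dsh xb N x) * P' (pidx xb N x) x)
     + integral {xb 0..xb N} (\<lambda>x. P (pidx xb N x) x * Q' (didx xb N x) (dsh xb N x))
     = (\<Sum>i<N. Q (didx xb N (xb (Suc i))) (dsh xb N (xb (Suc i))) * P i (xb (Suc i))
             - Q (didx xb N (xb i)) (dsh xb N (xb i)) * P i (xb i))
     + (\<Sum>j<N. P (pidx xb N (per xb N (dn xb N (Suc j)))) (per xb N (dn xb N (Suc j))) * Q j (dn xb N (Suc j))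
             - P (pidx xb N (per xb N (dn xb N j))) (per xb N (dn xb N j)) * Q j (dn xb N j))" .
qed

lemma poly_cont: "continuous_on UNIV (poly (p::real poly))"
  by (rule deriv_cont[OF poly_DERIV])

lemma K1:
  assumes ms: "mesh xb N"
  shows "(\<lambda>x. Wh1 xb N q x * Vh1 xb N (\<lambda>i. pderiv (r i)) x) integrable_on {xb 0..xb N}"
    "(\<lambda>x. Vh1 xb N r x * Wh1 xb N (\<lambda>i. pderiv (q i)) x) integrable_on {xb 0..xb N}"
    "integral {xb 0..xb N} (\<lambda>x. Wh1 xb N q x * Vh1 xb N (\<lambda>i. pderiv (r i)) x)
     + integral {xb 0..xb N} (\<lambda>x. Vh1 xb N r x * Wh1 xb N (\<lambda>i. pderiv (q i)) x)
     = (\<Sum>i<N. Wh1 xb N q (xb (Suc i)) * poly (r i) (xb (Suc i)) - Wh1 xb N q (xb i) * poly (r i) (xb i))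
     + (\<Sum>j<N. Vh1 xb N r (per xb N (dn xb N (Suc j))) * poly (q j) (dn xb N (Suc j))
             - Vh1 xb N r (per xb N (dn xb N j)) * poly (q j) (dn xb N j))"
  using ibp1[OF ms, of "\<lambda>i. poly (r i)" "\<lambda>i. poly (pderiv (r i))" "\<lambda>i. poly (q i)" "\<lambda>i. poly (pderiv (q i))"]
  by (auto simp: Vh1_def Wh1_def poly_DERIV poly_cont)

lemma oneD:
  assumes ms: "mesh xb N"
  shows "H1 \<beta> \<tau> xb N (h1, h2) (g1, g2) + H1 \<beta> \<tau> xb N (g1, g2) (h1, h2)
       = - (2 / \<tau>) * integral {xb 0..xb N}
           (\<lambda>x. (Vh1 xb N h1 x - Wh1 xb N h2 x) * (Vh1 xb N g1 x - Wh1 xb N g2 x))"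
proof -
  let ?V = "Vh1 xb N" and ?W = "Wh1 xb N" and ?I = "integral {xb 0..xb N}"
  define Bp where "Bp = (\<lambda>q r. \<Sum>i<N. ?W q (xb (Suc i)) * poly (r i) (xb (Suc i)) - ?W q (xb i) * poly (r i) (xb i))"
  define Bd where "Bd = (\<lambda>p s. \<Sum>j<N. ?V p (per xb N (dn xb N (Suc j))) * poly (s j) (dn xb N (Suc j))
             - ?V p (per xb N (dn xb N j)) * poly (s j) (dn xb N j))"
  have vol: "?I (\<lambda>x. \<beta> * ?W q x * ?V (\<lambda>i. pderiv (r i)) x + \<beta> * ?V p x * ?W (\<lambda>i. pderiv (s i)) x)
      = \<beta> * ?I (\<lambda>x. ?W q x * ?V (\<lambda>i. pderiv (r i)) x) + \<beta> * ?I (\<lambda>x. ?V p x * ?W (\<lambda>i. pderiv (s i)) x)"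
    for p q r s
  proof -
    have "?I (\<lambda>x. \<beta> * ?W q x * ?V (\<lambda>i. pderiv (r i)) x + \<beta> * ?V p x * ?W (\<lambda>i. pderiv (s i)) x)
       = ?I (\<lambda>x. \<beta> * (?W q x * ?V (\<lambda>i. pderiv (r i)) x)) + ?I (\<lambda>x. \<beta> * (?V p x * ?W (\<lambda>i. pderiv (s i)) x))"
      using integral_add[OF integrable_on_cmult_left[OF K1(1)[OF ms]] integrable_on_cmult_left[OF K1(2)[OF ms]],
          of \<beta> q r \<beta> p s]
      by (simp add: mult.assoc)
    then show ?thesis by simp
  qed
  have bnd: "(\<Sum>i<N. \<beta> * ?W q (xb (Suc i)) * poly (r i) (xb (Suc i)) - \<beta> * ?W q (xb i) * poly (r i) (xb i)
              + \<beta> * ?V p (per xb N (dn xb N (Suc i))) * poly (s i) (dn xb N (Suc i))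
              - \<beta> * ?V p (per xb N (dn xb N i)) * poly (s i) (dn xb N i))
       = \<beta> * Bp q r + \<beta> * Bd p s" for p q r s
    unfolding Bp_def Bd_def sum_distrib_left sum.distrib[symmetric]
    by (rule sum.cong) (auto simp: algebra_simps)
  have K: "\<beta> * ?I (\<lambda>x. ?W q x * ?V (\<lambda>i. pderiv (r i)) x) + \<beta> * ?I (\<lambda>x. ?V r x * ?W (\<lambda>i. pderiv (q i)) x)
      = \<beta> * Bp q r + \<beta> * Bd r q" for q r
    using K1(3)[OF ms, of q r] unfolding Bp_def Bd_def by (simp add: distrib_left[symmetric])
  have sym: "?I (\<lambda>x. (?V g1 x - ?W g2 x) * (?V h1 x - ?W h2 x)) = ?I (\<lambda>x. (?V h1 x - ?W h2 x) * (?V g1 x - ?W g2 x))"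
    by (simp add: mult.commute)
  show ?thesis
    unfolding H1_def prod.case vol bnd
    using K[of h2 g1] K[of g2 h1] sym by (simp add: algebra_simps)
qed

lemma mem_box_pair: "((x::real), (y::real)) \<in> box (a, c) (b, d) \<longleftrightarrow> a < x \<and> x < b \<and> c < y \<and> y < d"
  by (auto simp: mem_box Basis_prod_def)

lemma cbox_real: "cbox (a::real) b = {a..b}" by simp

lemma cell:
  fixes F G :: "real \<times> real \<Rightarrow> real"
  assumes "a \<le> b" "c \<le> d" and cG: "continuous_on (cbox (a, c) (b, d)) G"
    and FG: "\<And>x y. a < x \<Longrightarrow> x < b \<Longrightarrow> c < y \<Longrightarrow> y < d \<Longrightarrow> F (x, y) = G (x, y)"
  shows "(F has_integral integral (cbox (a, c) (b, d)) G) (cbox (a, c) (b, d))"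
    "((\<lambda>x. integral {c..d} (\<lambda>y. F (x, y))) has_integral integral (cbox (a, c) (b, d)) G) {a..b}"
    "((\<lambda>y. integral {a..b} (\<lambda>x. F (x, y))) has_integral integral (cbox (a, c) (b, d)) G) {c..d}"
    "\<And>x. a < x \<Longrightarrow> x < b \<Longrightarrow> (\<lambda>y. F (x, y)) integrable_on {c..d}"
    "\<And>y. c < y \<Longrightarrow> y < d \<Longrightarrow> (\<lambda>x. F (x, y)) integrable_on {a..b}"
proof -
  have Gi: "(G has_integral integral (cbox (a, c) (b, d)) G) (cbox (a, c) (b, d))"
    using integrable_continuous[OF cG] by (simp add: has_integral_integral)
  show "(F has_integral integral (cbox (a, c) (b, d)) G) (cbox (a, c) (b, d))"
  proof (rule has_integral_spike[OF negligible_frontier_interval _ Gi])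
    fix p assume "p \<in> cbox (a, c) (b, d) - (cbox (a, c) (b, d) - box (a, c) (b, d))"
    then have "p \<in> box (a, c) (b, d)" by blast
    then show "F p = G p" using FG by (cases p) (auto simp: mem_box_pair)
  qed
  have Gx: "(\<lambda>y. G (x, y)) integrable_on {c..d}" if "a \<le> x" "x \<le> b" for x
    using continuous_on_imp_integrable_on_Pair1[OF cG, of x] that by simp
  have Gy: "(\<lambda>x. G (x, y)) integrable_on {a..b}" if "c \<le> y" "y \<le> d" for y
  proof -
    have "continuous_on {a..b} (\<lambda>x. G (x, y))"
      by (rule continuous_on_compose2[OF cG]) (auto intro!: continuous_intros simp: that)
    then show ?thesis by (rule integrable_continuous_real)
  qed
  show Fx: "\<And>x. a < x \<Longrightarrow> x < b \<Longrightarrow> (\<lambda>y. F (x, y)) integrable_on {c..d}"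
  proof -
    fix x assume x: "a < x" "x < b"
    have "((\<lambda>y. G (x, y)) has_integral integral {c..d} (\<lambda>y. G (x, y))) {c..d}"
      using Gx x by (simp add: has_integral_integral)
    then have "((\<lambda>y. F (x, y)) has_integral integral {c..d} (\<lambda>y. G (x, y))) {c..d}"
      by (rule has_integral_spike_finite[of "{c,d}", rotated 2]) (use FG x in auto)
    then show "(\<lambda>y. F (x, y)) integrable_on {c..d}" by blast
  qed
  show Fy: "\<And>y. c < y \<Longrightarrow> y < d \<Longrightarrow> (\<lambda>x. F (x, y)) integrable_on {a..b}"
  proof -
    fix y assume y: "c < y" "y < d"
    have "((\<lambda>x. G (x, y)) has_integral integral {a..b} (\<lambda>x. G (x, y))) {a..b}"
      using Gy y by (simp add: has_integral_integral)
    then have "((\<lambda>x. F (x, y)) has_integral integral {a..b} (\<lambda>x. G (x, y))) {a..b}"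
      by (rule has_integral_spike_finite[of "{a,b}", rotated 2]) (use FG y in auto)
    then show "(\<lambda>x. F (x, y)) integrable_on {a..b}" by blast
  qed
  have i1: "integral (cbox (a, c) (b, d)) G = integral {a..b} (\<lambda>x. integral {c..d} (\<lambda>y. G (x, y)))"
    using integral_prod_continuous[OF cG] by simp
  have int1: "(\<lambda>x. integral {c..d} (\<lambda>y. G (x, y))) integrable_on {a..b}"
    using integral_integrable_2dim[OF cG] by simp
  show "((\<lambda>x. integral {c..d} (\<lambda>y. F (x, y))) has_integral integral (cbox (a, c) (b, d)) G) {a..b}"
  proof (rule has_integral_spike_finite[of "{a,b}", rotated 2])
    show "((\<lambda>x. integral {c..d} (\<lambda>y. G (x, y))) has_integral integral (cbox (a, c) (b, d)) G) {a..b}"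
      using int1 i1 by (simp add: has_integral_integral)
    fix x assume "x \<in> {a..b} - {a, b}"
    then have x: "a < x" "x < b" by auto
    show "integral {c..d} (\<lambda>y. F (x, y)) = integral {c..d} (\<lambda>y. G (x, y))"
      by (rule integral_spike[of "{c,d}"]) (use FG x in auto)
  qed simp
  have cG': "continuous_on (cbox (a, c) (b, d)) (\<lambda>(x, y). (\<lambda>x y. G (x, y)) x y)" using cG by simp
  have i2: "integral (cbox (a, c) (b, d)) G = integral {c..d} (\<lambda>y. integral {a..b} (\<lambda>x. G (x, y)))"
    using i1 integral_swap_continuous[OF cG'] by simp
  have cGs: "continuous_on (cbox (c, a) (d, b)) (\<lambda>p. G (snd p, fst p))"
    by (rule continuous_on_compose2[OF cG]) (auto intro!: continuous_intros)
  have int2: "(\<lambda>y. integral {a..b} (\<lambda>x. G (x, y))) integrable_on {c..d}"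
    using integral_integrable_2dim[OF cGs] by simp
  show "((\<lambda>y. integral {a..b} (\<lambda>x. F (x, y))) has_integral integral (cbox (a, c) (b, d)) G) {c..d}"
  proof (rule has_integral_spike_finite[of "{c,d}", rotated 2])
    show "((\<lambda>y. integral {a..b} (\<lambda>x. G (x, y))) has_integral integral (cbox (a, c) (b, d)) G) {c..d}"
      using int2 i2 by (simp add: has_integral_integral)
    fix y assume "y \<in> {c..d} - {c, d}"
    then have y: "c < y" "y < d" by auto
    show "integral {a..b} (\<lambda>x. F (x, y)) = integral {a..b} (\<lambda>x. G (x, y))"
      by (rule integral_spike[of "{a,b}"]) (use FG y in auto)
  qed simp
qed

lemma combx:
  fixes F :: "real \<times> real \<Rightarrow> real"
  assumes "a \<le> m" "m \<le> b" "(F has_integral i) (cbox (a, c) (m, d))" "(F has_integral j) (cbox (m, c) (b, d))"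
  shows "(F has_integral (i + j)) (cbox (a, c) (b, d))"
proof (rule has_integral_split[where k = "(1, 0)" and c = m])
  have "cbox (a, c) (b, d) \<inter> {x. x \<bullet> (1, 0) \<le> m} = cbox (a, c) (m, d)"
    using assms(1,2) by (auto simp: cbox_Pair_eq inner_prod_def)
  then show "(F has_integral i) (cbox (a, c) (b, d) \<inter> {x. x \<bullet> (1, 0) \<le> m})" using assms(3) by simp
  have "cbox (a, c) (b, d) \<inter> {x. m \<le> x \<bullet> (1, 0)} = cbox (m, c) (b, d)"
    using assms(1,2) by (auto simp: cbox_Pair_eq inner_prod_def)
  then show "(F has_integral j) (cbox (a, c) (b, d) \<inter> {x. m \<le> x \<bullet> (1, 0)})" using assms(4) by simp
  show "(1::real, 0::real) \<in> Basis" by (simp add: Basis_prod_def)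
qed

lemma comby:
  fixes F :: "real \<times> real \<Rightarrow> real"
  assumes "c \<le> m" "m \<le> d" "(F has_integral i) (cbox (a, c) (b, m))" "(F has_integral j) (cbox (a, m) (b, d))"
  shows "(F has_integral (i + j)) (cbox (a, c) (b, d))"
proof (rule has_integral_split[where k = "(0, 1)" and c = m])
  have "cbox (a, c) (b, d) \<inter> {x. x \<bullet> (0, 1) \<le> m} = cbox (a, c) (b, m)"
    using assms(1,2) by (auto simp: cbox_Pair_eq inner_prod_def)
  then show "(F has_integral i) (cbox (a, c) (b, d) \<inter> {x. x \<bullet> (0, 1) \<le> m})" using assms(3) by simp
  have "cbox (a, c) (b, d) \<inter> {x. m \<le> x \<bullet> (0, 1)} = cbox (a, m) (b, d)"
    using assms(1,2) by (auto simp: cbox_Pair_eq inner_prod_def)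
  then show "(F has_integral j) (cbox (a, c) (b, d) \<inter> {x. m \<le> x \<bullet> (0, 1)})" using assms(4) by simp
  show "(0::real, 1::real) \<in> Basis" by (simp add: Basis_prod_def)
qed

lemma chain_le: "\<forall>m<M. t m \<le> t (Suc m) \<Longrightarrow> (t::nat \<Rightarrow> real) 0 \<le> t M"
  by (induction M) (auto intro: order.trans)

lemma grid_combine:
  fixes F :: "real \<times> real \<Rightarrow> real"
  assumes s: "\<forall>m<M. s m \<le> s (Suc m)" and t: "\<forall>l<K. t l \<le> t (Suc l)"
    and I: "\<And>m l. m < M \<Longrightarrow> l < K \<Longrightarrow> (F has_integral I m l) (cbox (s m, t l) (s (Suc m), t (Suc l)))"
  shows "(F has_integral (\<Sum>m<M. \<Sum>l<K. I m l)) (cbox (s 0, t 0) (s M, t K))"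
proof -
  have col: "(F has_integral (\<Sum>l<K'. I m l)) (cbox (s m, t 0) (s (Suc m), t K'))" if "m < M" "K' \<le> K" for m K'
    using that(2)
  proof (induction K')
    case 0 then show ?case using has_integral_null[of "(s m, t 0)" "(s (Suc m), t 0)" F] by (simp add: content_Pair)
  next
    case (Suc K')
    have "t 0 \<le> t K'" using chain_le[of K' t] t Suc.prems by auto
    then show ?case using comby[OF _ _ Suc.IH I[OF that(1)]] t Suc.prems by simp
  qed
  have "(F has_integral (\<Sum>m<M'. \<Sum>l<K. I m l)) (cbox (s 0, t 0) (s M', t K))" if "M' \<le> M" for M'
    using that
  proof (induction M')
    case 0 then show ?case using has_integral_null[of "(s m, t 0)" "(s (Suc m), t 0)" F] by (simp add: content_Pair)
  next
    case (Suc M')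
    have "s 0 \<le> s M'" using chain_le[of M' s] s Suc.prems by auto
    then show ?case using combx[OF _ _ Suc.IH col] s Suc.prems by simp
  qed
  then show ?thesis by simp
qed

definition pwc2 :: "(nat \<Rightarrow> real) \<Rightarrow> nat \<Rightarrow> (nat \<Rightarrow> real) \<Rightarrow> nat \<Rightarrow> (real \<times> real \<Rightarrow> real) \<Rightarrow> bool" where
  "pwc2 s M t K F \<longleftrightarrow> (\<forall>m<M. \<forall>l<K. \<exists>G. continuous_on (cbox (s m, t l) (s (Suc m), t (Suc l))) G \<and>
      (\<forall>x y. s m < x \<longrightarrow> x < s (Suc m) \<longrightarrow> t l < y \<longrightarrow> y < t (Suc l) \<longrightarrow> F (x, y) = G (x, y)))"

lemma fubini_grid:
  fixes F :: "real \<times> real \<Rightarrow> real"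
  assumes s: "\<forall>m<M. s m \<le> s (Suc m)" and t: "\<forall>l<K. t l \<le> t (Suc l)"
    and pw: "pwc2 s M t K F"
  shows "F integrable_on cbox (s 0, t 0) (s M, t K)"
    "integral (cbox (s 0, t 0) (s M, t K)) F = integral {s 0..s M} (\<lambda>x. integral {t 0..t K} (\<lambda>y. F (x, y)))"
    "integral (cbox (s 0, t 0) (s M, t K)) F = integral {t 0..t K} (\<lambda>y. integral {s 0..s M} (\<lambda>x. F (x, y)))"
proof -
  obtain G where G: "\<And>m l. m < M \<Longrightarrow> l < K \<Longrightarrow> continuous_on (cbox (s m, t l) (s (Suc m), t (Suc l))) (G m l)"
    "\<And>m l x y. m < M \<Longrightarrow> l < K \<Longrightarrow> s m < x \<Longrightarrow> x < s (Suc m) \<Longrightarrow> t l < y \<Longrightarrow> y < t (Suc l) \<Longrightarrow> F (x, y) = G m l (x, y)"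
    using pw unfolding pwc2_def by metis
  define I where "I = (\<lambda>m l. integral (cbox (s m, t l) (s (Suc m), t (Suc l))) (G m l))"
  have C1: "(F has_integral I m l) (cbox (s m, t l) (s (Suc m), t (Suc l)))" if "m<M" "l<K" for m l
    unfolding I_def by (rule cell(1)[of "s m" "s (Suc m)" "t l" "t (Suc l)" "G m l" F]) (use that s t G in auto)
  have C2: "((\<lambda>x. integral {t l..t (Suc l)} (\<lambda>y. F (x, y))) has_integral I m l) {s m..s (Suc m)}" if "m<M" "l<K" for m l
    unfolding I_def by (rule cell(2)[of "s m" "s (Suc m)" "t l" "t (Suc l)" "G m l" F]) (use that s t G in auto)
  have C3: "((\<lambda>y. integral {s m..s (Suc m)} (\<lambda>x. F (x, y))) has_integral I m l) {t l..t (Suc l)}" if "m<M" "l<K" for m l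
    unfolding I_def by (rule cell(3)[of "s m" "s (Suc m)" "t l" "t (Suc l)" "G m l" F]) (use that s t G in auto)
  have C4: "(\<lambda>y. F (x, y)) integrable_on {t l..t (Suc l)}" if "m<M" "l<K" "s m < x" "x < s (Suc m)" for m l x
    by (rule cell(4)[of "s m" "s (Suc m)" "t l" "t (Suc l)" "G m l" F]) (use that s t G in auto)
  have C5: "(\<lambda>x. F (x, y)) integrable_on {s m..s (Suc m)}" if "m<M" "l<K" "t l < y" "y < t (Suc l)" for m l y
    by (rule cell(5)[of "s m" "s (Suc m)" "t l" "t (Suc l)" "G m l" F]) (use that s t G in auto)
  have h2: "(F has_integral (\<Sum>m<M. \<Sum>l<K. I m l)) (cbox (s 0, t 0) (s M, t K))"
    by (rule grid_combine[OF s t]) (use C1 in auto)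
  then show "F integrable_on cbox (s 0, t 0) (s M, t K)" by blast
  have int: "integral (cbox (s 0, t 0) (s M, t K)) F = (\<Sum>m<M. \<Sum>l<K. I m l)"
    using h2 by (rule integral_unique)
  have "((\<lambda>x. integral {t 0..t K} (\<lambda>y. F (x, y))) has_integral (\<Sum>m<M. \<Sum>l<K. I m l)) {s 0..s M}"
  proof (rule combine_pieces[OF s])
    fix m assume m: "m < M"
    have a: "((\<lambda>x. \<Sum>l<K. integral {t l..t (Suc l)} (\<lambda>y. F (x, y))) has_integral (\<Sum>l<K. I m l)) {s m..s (Suc m)}"
      by (rule has_integral_sum) (use C2 m in auto)
    show "((\<lambda>x. integral {t 0..t K} (\<lambda>y. F (x, y))) has_integral (\<Sum>l<K. I m l)) {s m..s (Suc m)}"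
    proof (rule has_integral_spike_finite[of "{s m, s (Suc m)}", OF _ _ a])
      fix x assume "x \<in> {s m..s (Suc m)} - {s m, s (Suc m)}"
      then have x: "s m < x" "x < s (Suc m)" by auto
      have "((\<lambda>y. F (x, y)) has_integral (\<Sum>l<K. integral {t l..t (Suc l)} (\<lambda>y. F (x, y)))) {t 0..t K}"
        by (rule combine_pieces[OF t]) (use C4[OF m _ x] in \<open>auto intro: integrable_integral\<close>)
      then show "integral {t 0..t K} (\<lambda>y. F (x, y)) = (\<Sum>l<K. integral {t l..t (Suc l)} (\<lambda>y. F (x, y)))"
        by (rule integral_unique)
    qed simp
  qed
  then show "integral (cbox (s 0, t 0) (s M, t K)) F = integral {s 0..s M} (\<lambda>x. integral {t 0..t K} (\<lambda>y. F (x, y)))"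
    using int by (simp add: integral_unique)
  have "((\<lambda>y. integral {s 0..s M} (\<lambda>x. F (x, y))) has_integral (\<Sum>l<K. \<Sum>m<M. I m l)) {t 0..t K}"
  proof (rule combine_pieces[OF t])
    fix l assume l: "l < K"
    have a: "((\<lambda>y. \<Sum>m<M. integral {s m..s (Suc m)} (\<lambda>x. F (x, y))) has_integral (\<Sum>m<M. I m l)) {t l..t (Suc l)}"
      by (rule has_integral_sum) (use C3 l in auto)
    show "((\<lambda>y. integral {s 0..s M} (\<lambda>x. F (x, y))) has_integral (\<Sum>m<M. I m l)) {t l..t (Suc l)}"
    proof (rule has_integral_spike_finite[of "{t l, t (Suc l)}", OF _ _ a])
      fix y assume "y \<in> {t l..t (Suc l)} - {t l, t (Suc l)}"
      then have y: "t l < y" "y < t (Suc l)" by auto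
      have "((\<lambda>x. F (x, y)) has_integral (\<Sum>m<M. integral {s m..s (Suc m)} (\<lambda>x. F (x, y)))) {s 0..s M}"
        by (rule combine_pieces[OF s]) (use C5[OF _ l y] in \<open>auto intro: integrable_integral\<close>)
      then show "integral {s 0..s M} (\<lambda>x. F (x, y)) = (\<Sum>m<M. integral {s m..s (Suc m)} (\<lambda>x. F (x, y)))"
        by (rule integral_unique)
    qed simp
  qed
  then show "integral (cbox (s 0, t 0) (s M, t K)) F = integral {t 0..t K} (\<lambda>y. integral {s 0..s M} (\<lambda>x. F (x, y)))"
    using int by (simp add: integral_unique sum.swap[of _ "{..<K}"])
qed

lemma pwc_piece_info:
  assumes "mesh xb N" "pwc (rm xb) (2*N) f" "m < 2 * N"
  shows "f integrable_on {rm xb m..rm xb (Suc m)}"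
  using pwc_piece[OF assms(2,3)] rm_mono[OF assms(1)] assms(3) by simp

lemma O1:
  fixes f :: "real \<Rightarrow> real"
  assumes ms: "mesh xb N" and pw: "pwc (rm xb) (2*N) f"
    and a1: "\<And>i x. i < N \<Longrightarrow> xb i < x \<Longrightarrow> x < cc xb i \<Longrightarrow> a i x = f x"
    and a2: "\<And>i x. i < N \<Longrightarrow> cc xb i < x \<Longrightarrow> x < xb (Suc i) \<Longrightarrow> a i x = f x"
  shows "integral {xb 0..xb N} f = (\<Sum>i<N. integral {xb i..xb (Suc i)} (a i))"
proof -
  define p where "p = (\<lambda>m. integral {rm xb m..rm xb (Suc m)} f)"
  have pi: "(f has_integral p m) {rm xb m..rm xb (Suc m)}" if "m < 2*N" for m
    using pwc_piece_info[OF ms pw that] by (simp add: p_def has_integral_integral)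
  have pe: "(f has_integral p (2*i)) {xb i..cc xb i}" if "i < N" for i
    using pi[of "2*i"] that by simp
  have po: "(f has_integral p (Suc (2*i))) {cc xb i..xb (Suc i)}" if "i < N" for i
    using pi[of "Suc (2*i)"] that by simp
  have "(f has_integral (\<Sum>m<2*N. p m)) {xb 0..xb N}"
    using combine_pieces[OF rm_mono[OF ms] pi] by simp
  then have "integral {xb 0..xb N} f = (\<Sum>i<N. p (2*i) + p (Suc (2*i)))"
    by (simp add: integral_unique sum_even_odd)
  also have "\<dots> = (\<Sum>i<N. integral {xb i..xb (Suc i)} (a i))"
  proof (rule sum.cong[OF refl])
    fix i assume "i \<in> {..<N}" then have i: "i < N" by simp
    have cb: "xb i < cc xb i" "cc xb i < xb (Suc i)" using cc_bounds[OF ms i] by auto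
    have h1: "(a i has_integral p (2*i)) {xb i..cc xb i}"
      by (rule has_integral_spike_finite[of "{xb i, cc xb i}", OF _ _ pe[OF i]]) (use i a1 in auto)
    have h2: "(a i has_integral p (Suc (2*i))) {cc xb i..xb (Suc i)}"
      by (rule has_integral_spike_finite[of "{cc xb i, xb (Suc i)}", OF _ _ po[OF i]])
         (use i a2 in auto)
    have "(a i has_integral (p (2*i) + p (Suc (2*i)))) {xb i..xb (Suc i)}"
      using has_integral_combine[OF _ _ h1 h2] cb by simp
    then show "p (2*i) + p (Suc (2*i)) = integral {xb i..xb (Suc i)} (a i)"
      by (simp add: integral_unique)
  qed
  finally show ?thesis .
qed

lemma O2:
  fixes f :: "real \<Rightarrow> real"
  assumes ms: "mesh xb N" and pw: "pwc (rm xb) (2*N) f"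
    and b1: "\<And>i x. i < N \<Longrightarrow> cc xb i < x \<Longrightarrow> x < xb (Suc i) \<Longrightarrow> b i x = f x"
    and b2: "\<And>i x. Suc i < N \<Longrightarrow> xb (Suc i) < x \<Longrightarrow> x < cc xb (Suc i) \<Longrightarrow> b i x = f x"
    and b3: "\<And>x. xb N < x \<Longrightarrow> x < cc xb 0 + (xb N - xb 0) \<Longrightarrow> b (N - 1) x = f (x - (xb N - xb 0))"
  shows "integral {xb 0..xb N} f = (\<Sum>i<N. integral {dn xb N i..dn xb N (Suc i)} (b i))"
proof -
  define L where "L = xb N - xb 0"
  define p where "p = (\<lambda>m. integral {rm xb m..rm xb (Suc m)} f)"
  have pi: "(f has_integral p m) {rm xb m..rm xb (Suc m)}" if "m < 2*N" for m
    using pwc_piece_info[OF ms pw that] by (simp add: p_def has_integral_integral)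
  have pe: "(f has_integral p (2*i)) {xb i..cc xb i}" if "i < N" for i
    using pi[of "2*i"] that by simp
  have po: "(f has_integral p (Suc (2*i))) {cc xb i..xb (Suc i)}" if "i < N" for i
    using pi[of "Suc (2*i)"] that by simp
  have "(f has_integral (\<Sum>m<2*N. p m)) {xb 0..xb N}"
    using combine_pieces[OF rm_mono[OF ms] pi] by simp
  then have lhs: "integral {xb 0..xb N} f = (\<Sum>i<N. p (2*i) + p (Suc (2*i)))"
    by (simp add: integral_unique sum_even_odd)
  obtain n where N: "N = Suc n" using mesh_N[OF ms] by (cases N) auto
  have mid: "integral {dn xb N i..dn xb N (Suc i)} (b i) = p (Suc (2*i)) + p (2 * Suc i)" if i: "i < n" for i
  proof -
    have iN: "i < N" "Suc i < N" using i N by auto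
    have cb: "cc xb i < xb (Suc i)" "xb (Suc i) < cc xb (Suc i)" using cc_bounds[OF ms] iN by auto
    have h1: "(b i has_integral p (Suc (2*i))) {cc xb i..xb (Suc i)}"
      by (rule has_integral_spike_finite[of "{cc xb i, xb (Suc i)}", OF _ _ po[OF iN(1)]])
         (use iN b1 in auto)
    have h2: "(b i has_integral p (2 * Suc i)) {xb (Suc i)..cc xb (Suc i)}"
      by (rule has_integral_spike_finite[of "{xb (Suc i), cc xb (Suc i)}", OF _ _ pe[OF iN(2)]])
         (use iN b2 in auto)
    have "(b i has_integral (p (Suc (2*i)) + p (2 * Suc i))) {cc xb i..cc xb (Suc i)}"
      using has_integral_combine[OF _ _ h1 h2] cb by simp
    then show ?thesis using iN by (simp add: integral_unique dn_def)
  qed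
  have last: "integral {dn xb N n..dn xb N (Suc n)} (b n) = p (Suc (2*n)) + p 0"
  proof -
    have nN: "n < N" "N - 1 = n" using N by auto
    have cb: "cc xb n < xb N" "xb 0 < cc xb 0" using cc_bounds[OF ms, of n] cc_bounds[OF ms, of 0] N by auto
    have po': "(f has_integral p (Suc (2*n))) {cc xb n..xb N}" using po[OF nN(1)] N by simp
    have h1: "(b n has_integral p (Suc (2*n))) {cc xb n..xb N}"
      by (rule has_integral_spike_finite[of "{cc xb n, xb N}", OF _ _ po'])
         (use nN b1 N in auto)
    have f0: "(f has_integral p 0) {xb 0..cc xb 0}" using pe[of 0] N by simp
    have f0': "((\<lambda>x. f (x - L)) has_integral p 0) {xb 0 + L..cc xb 0 + L}"
      using f0 has_integral_shift_Icc_real[of "\<lambda>x. f (x - L)" L "p 0" "xb 0" "cc xb 0"]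
      by (simp add: o_def)
    then have f0'': "((\<lambda>x. f (x - L)) has_integral p 0) {xb N..cc xb 0 + L}" by (simp add: L_def)
    have h2: "(b n has_integral p 0) {xb N..cc xb 0 + L}"
      by (rule has_integral_spike_finite[of "{xb N, cc xb 0 + L}", OF _ _ f0''])
         (use b3 nN in \<open>auto simp: L_def\<close>)
    have "(b n has_integral (p (Suc (2*n)) + p 0)) {cc xb n..cc xb 0 + L}"
      using has_integral_combine[OF _ _ h1 h2] cb by (simp add: L_def)
    then show ?thesis using nN N by (simp add: integral_unique dn_def L_def)
  qed
  have "(\<Sum>i<N. integral {dn xb N i..dn xb N (Suc i)} (b i))
      = (\<Sum>i<n. p (Suc (2*i)) + p (2 * Suc i)) + (p (Suc (2*n)) + p 0)"
    using mid last N by simp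
  also have "\<dots> = (\<Sum>i<N. p (2*i) + p (Suc (2*i)))"
    unfolding N sum.distrib
    by (simp only: sum.lessThan_Suc_shift[of "\<lambda>i. p (2*i)"] sum.lessThan_Suc) (simp add: ac_simps)
  finally show ?thesis using lhs by simp
qed

lemma poly2_dy_deriv: "((\<lambda>y. poly2 k c a y) has_real_derivative poly2_dy k c a y) (at y)"
  unfolding poly2_def poly2_dy_def
  by (auto intro!: derivative_eq_intros DERIV_sum simp: algebra_simps)

lemma poly2_dx_deriv: "((\<lambda>x. poly2 k c x b) has_real_derivative poly2_dx k c x b) (at x)"
  unfolding poly2_def poly2_dx_def
  by (auto intro!: derivative_eq_intros DERIV_sum simp: algebra_simps)

lemma poly2_cont[continuous_intros]:
  "continuous_on S f \<Longrightarrow> continuous_on S g \<Longrightarrow> continuous_on S (\<lambda>p. poly2 k c (f p) (g p))"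
  unfolding poly2_def by (intro continuous_intros)

lemma poly2_dx_cont[continuous_intros]:
  "continuous_on S f \<Longrightarrow> continuous_on S g \<Longrightarrow> continuous_on S (\<lambda>p. poly2_dx k c (f p) (g p))"
  unfolding poly2_dx_def by (intro continuous_intros)

lemma poly2_dy_cont[continuous_intros]:
  "continuous_on S f \<Longrightarrow> continuous_on S g \<Longrightarrow> continuous_on S (\<lambda>p. poly2_dy k c (f p) (g p))"
  unfolding poly2_dy_def by (intro continuous_intros)

lemma umesh_mesh: assumes "a < b" "1 \<le> N" shows "mesh (umesh a b N) N"
  using assms unfolding mesh_def umesh_def by (auto simp: field_simps)

lemma umesh_0[simp]: "umesh a b N 0 = a" by (simp add: umesh_def)
lemma umesh_N: "1 \<le> N \<Longrightarrow> umesh a b N N = b" by (simp add: umesh_def)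

lemma pwc2_rm:
  assumes mx: "mesh xb Nx" and my: "mesh yb Ny"
    and cont: "\<And>i d c i' d' c'. continuous_on UNIV (\<lambda>p. H i d (fst p + c) i' d' (snd p + c') (fst p) (snd p))"
  shows "pwc2 (rm xb) (2 * Nx) (rm yb) (2 * Ny)
     (\<lambda>(x, y). H (pidx xb Nx x) (didx xb Nx x) (dsh xb Nx x) (pidx yb Ny y) (didx yb Ny y) (dsh yb Ny y) x y)"
  unfolding pwc2_def
proof (intro allI impI)
  fix m l assume m: "m < 2 * Nx" and l: "l < 2 * Ny"
  show "\<exists>G. continuous_on (cbox (rm xb m, rm yb l) (rm xb (Suc m), rm yb (Suc l))) G \<and>
      (\<forall>x y. rm xb m < x \<longrightarrow> x < rm xb (Suc m) \<longrightarrow> rm yb l < y \<longrightarrow> y < rm yb (Suc l) \<longrightarrow>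
        (\<lambda>(x, y). H (pidx xb Nx x) (didx xb Nx x) (dsh xb Nx x) (pidx yb Ny y) (didx yb Ny y) (dsh yb Ny y) x y) (x, y) = G (x, y))"
    by (rule exI[of _ "\<lambda>p. H (m div 2) (dI Nx m) (fst p + dS xb Nx m) (l div 2) (dI Ny l) (snd p + dS yb Ny l) (fst p) (snd p)"])
       (use piece_info[OF mx m] piece_info[OF my l] continuous_on_subset[OF cont] in auto)
qed

lemma yline:
  assumes my: "mesh Y Ny"
  shows "integral {Y 0..Y Ny} (\<lambda>y. W2 (poly2 k) X Nx Y Ny B x y * V2 (poly2_dy k) X Nx Y Ny A x y
                                + V2 (poly2 k) X Nx Y Ny A x y * W2 (poly2_dy k) X Nx Y Ny B x y)
   = (\<Sum>j<Ny. W2 (poly2 k) X Nx Y Ny B x (Y (Suc j)) * poly2 k (A (pidx X Nx x) j) x (Y (Suc j))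
             - W2 (poly2 k) X Nx Y Ny B x (Y j) * poly2 k (A (pidx X Nx x) j) x (Y j))
   + (\<Sum>j<Ny. V2 (poly2 k) X Nx Y Ny A x (per Y Ny (dn Y Ny (Suc j))) * poly2 k (B (didx X Nx x) j) (dsh X Nx x) (dn Y Ny (Suc j))
             - V2 (poly2 k) X Nx Y Ny A x (per Y Ny (dn Y Ny j)) * poly2 k (B (didx X Nx x) j) (dsh X Nx x) (dn Y Ny j))"
proof -
  note I = ibp1[OF my, of "\<lambda>j y. poly2 k (A (pidx X Nx x) j) x y" "\<lambda>j y. poly2_dy k (A (pidx X Nx x) j) x y"
      "\<lambda>j y. poly2 k (B (didx X Nx x) j) (dsh X Nx x) y" "\<lambda>j y. poly2_dy k (B (didx X Nx x) j) (dsh X Nx x) y",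
      OF poly2_dy_deriv poly2_dy_deriv]
  have c: "continuous_on UNIV (\<lambda>y. poly2_dy k c a y)" for c a by (intro continuous_intros)
  show ?thesis
    using I(1)[OF c c] I(2)[OF c c] I(3)[OF c c]
    by (simp add: integral_add V2_def W2_def)
qed

lemma xline:
  assumes mx: "mesh X Nx"
  shows "integral {X 0..X Nx} (\<lambda>x. W2 (poly2 k) X Nx Y Ny B x y * V2 (poly2_dx k) X Nx Y Ny A x y
                                + V2 (poly2 k) X Nx Y Ny A x y * W2 (poly2_dx k) X Nx Y Ny B x y)
   = (\<Sum>i<Nx. W2 (poly2 k) X Nx Y Ny B (X (Suc i)) y * poly2 k (A i (pidx Y Ny y)) (X (Suc i)) y
             - W2 (poly2 k) X Nx Y Ny B (X i) y * poly2 k (A i (pidx Y Ny y)) (X i) y)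
   + (\<Sum>i<Nx. V2 (poly2 k) X Nx Y Ny A (per X Nx (dn X Nx (Suc i))) y * poly2 k (B i (didx Y Ny y)) (dn X Nx (Suc i)) (dsh Y Ny y)
             - V2 (poly2 k) X Nx Y Ny A (per X Nx (dn X Nx i)) y * poly2 k (B i (didx Y Ny y)) (dn X Nx i) (dsh Y Ny y))"
proof -
  note I = ibp1[OF mx, of "\<lambda>i x. poly2 k (A i (pidx Y Ny y)) x y" "\<lambda>i x. poly2_dx k (A i (pidx Y Ny y)) x y"
      "\<lambda>i x. poly2 k (B i (didx Y Ny y)) x (dsh Y Ny y)" "\<lambda>i x. poly2_dx k (B i (didx Y Ny y)) x (dsh Y Ny y)",
      OF poly2_dx_deriv poly2_dx_deriv]
  have c: "continuous_on UNIV (\<lambda>x. poly2_dx k c x b)" for c b by (intro continuous_intros)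
  show ?thesis
    using I(1)[OF c c] I(2)[OF c c] I(3)[OF c c]
    by (simp add: integral_add V2_def W2_def)
qed

lemma pidx_mid: "mesh xb N \<Longrightarrow> i < N \<Longrightarrow> xb i < x \<Longrightarrow> x < xb (Suc i) \<Longrightarrow> pidx xb N x = i"
  by (rule pidx_eq) auto

lemma didx_mid1: assumes "mesh xb N" "i < N" "cc xb i < x" "x < xb (Suc i)"
  shows "didx xb N x = i" "dsh xb N x = x" "per xb N x = x"
proof -
  have "Suc i < N \<Longrightarrow> x < cc xb (Suc i)" using cc_bounds[OF assms(1), of "Suc i"] assms(4) by auto
  then show "didx xb N x = i" "dsh xb N x = x" using didx_eq[OF assms(1,2)] assms(3) by auto
  have "xb (Suc i) \<le> xb N" using mesh_le[OF assms(1)] assms(2) by simp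
  then show "per xb N x = x" using assms(4) by (simp add: per_def)
qed

lemma didx_mid2: assumes "mesh xb N" "Suc i < N" "xb (Suc i) < x" "x < cc xb (Suc i)"
  shows "didx xb N x = i" "dsh xb N x = x" "per xb N x = x"
proof -
  have "cc xb i < xb (Suc i)" using cc_bounds[OF assms(1), of i] assms(2) by simp
  then show "didx xb N x = i" "dsh xb N x = x" using didx_eq[OF assms(1), of i x] assms by auto
  have "cc xb (Suc i) < xb (Suc (Suc i))" "xb (Suc (Suc i)) \<le> xb N"
    using cc_bounds[OF assms(1), of "Suc i"] mesh_le[OF assms(1)] assms(2) by auto
  then show "per xb N x = x" using assms(4) by (simp add: per_def)
qed

lemma didx_wrap2: assumes "mesh xb N" "xb N < x" "x < cc xb 0 + (xb N - xb 0)"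
  shows "per xb N x = x - (xb N - xb 0)" "didx xb N (x - (xb N - xb 0)) = N - 1"
    "dsh xb N (x - (xb N - xb 0)) = x"
  using assms didx_wrap[of "x - (xb N - xb 0)" xb N] by (auto simp: per_def)

lemma ypart:
  assumes mx: "mesh X Nx" and my: "mesh Y Ny"
  shows "(\<lambda>(x, y). W2 (poly2 k) X Nx Y Ny B x y * V2 (poly2_dy k) X Nx Y Ny A x y) integrable_on ({X 0..X Nx} \<times> {Y 0..Y Ny})"
    "(\<lambda>(x, y). V2 (poly2 k) X Nx Y Ny A x y * W2 (poly2_dy k) X Nx Y Ny B x y) integrable_on ({X 0..X Nx} \<times> {Y 0..Y Ny})"
    "integral ({X 0..X Nx} \<times> {Y 0..Y Ny}) (\<lambda>(x, y). W2 (poly2 k) X Nx Y Ny B x y * V2 (poly2_dy k) X Nx Y Ny A x y)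
   + integral ({X 0..X Nx} \<times> {Y 0..Y Ny}) (\<lambda>(x, y). V2 (poly2 k) X Nx Y Ny A x y * W2 (poly2_dy k) X Nx Y Ny B x y)
   = (\<Sum>i<Nx. \<Sum>j<Ny. integral {X i..X (Suc i)}
        (\<lambda>x. W2 (poly2 k) X Nx Y Ny B x (Y (Suc j)) * poly2 k (A i j) x (Y (Suc j))
           - W2 (poly2 k) X Nx Y Ny B x (Y j) * poly2 k (A i j) x (Y j)))
   + (\<Sum>i<Nx. \<Sum>j<Ny. integral {dn X Nx i..dn X Nx (Suc i)}
        (\<lambda>x. V2 (poly2 k) X Nx Y Ny A (per X Nx x) (per Y Ny (dn Y Ny (Suc j))) * poly2 k (B i j) x (dn Y Ny (Suc j))
           - V2 (poly2 k) X Nx Y Ny A (per X Nx x) (per Y Ny (dn Y Ny j)) * poly2 k (B i j) x (dn Y Ny j)))"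
proof -
  let ?R = "{X 0..X Nx} \<times> {Y 0..Y Ny}"
  have R: "?R = cbox (rm X 0, rm Y 0) (rm X (2*Nx), rm Y (2*Ny))" by (simp add: cbox_Pair_eq)
  note smx = rm_mono[OF mx] and smy = rm_mono[OF my]
  have pF1: "pwc2 (rm X) (2*Nx) (rm Y) (2*Ny) (\<lambda>(x, y). W2 (poly2 k) X Nx Y Ny B x y * V2 (poly2_dy k) X Nx Y Ny A x y)"
    using pwc2_rm[OF mx my, of "\<lambda>i d z i' d' z' x y. poly2 k (B d d') z z' * poly2_dy k (A i i') x y"]
    by (simp add: V2_def W2_def continuous_intros)
  have pF2: "pwc2 (rm X) (2*Nx) (rm Y) (2*Ny) (\<lambda>(x, y). V2 (poly2 k) X Nx Y Ny A x y * W2 (poly2_dy k) X Nx Y Ny B x y)"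
    using pwc2_rm[OF mx my, of "\<lambda>i d z i' d' z' x y. poly2 k (A i i') x y * poly2_dy k (B d d') z z'"]
    by (simp add: V2_def W2_def continuous_intros)
  have pF: "pwc2 (rm X) (2*Nx) (rm Y) (2*Ny) (\<lambda>(x, y). W2 (poly2 k) X Nx Y Ny B x y * V2 (poly2_dy k) X Nx Y Ny A x y
                                + V2 (poly2 k) X Nx Y Ny A x y * W2 (poly2_dy k) X Nx Y Ny B x y)"
    using pwc2_rm[OF mx my, of "\<lambda>i d z i' d' z' x y. poly2 k (B d d') z z' * poly2_dy k (A i i') x y + poly2 k (A i i') x y * poly2_dy k (B d d') z z'"]
    by (simp add: V2_def W2_def continuous_intros)
  show i1: "(\<lambda>(x, y). W2 (poly2 k) X Nx Y Ny B x y * V2 (poly2_dy k) X Nx Y Ny A x y) integrable_on ?R"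
    using fubini_grid(1)[OF smx smy pF1] R by simp
  show i2: "(\<lambda>(x, y). V2 (poly2 k) X Nx Y Ny A x y * W2 (poly2_dy k) X Nx Y Ny B x y) integrable_on ?R"
    using fubini_grid(1)[OF smx smy pF2] R by simp
  have "integral ?R (\<lambda>(x, y). W2 (poly2 k) X Nx Y Ny B x y * V2 (poly2_dy k) X Nx Y Ny A x y)
   + integral ?R (\<lambda>(x, y). V2 (poly2 k) X Nx Y Ny A x y * W2 (poly2_dy k) X Nx Y Ny B x y)
   = integral ?R (\<lambda>(x, y). W2 (poly2 k) X Nx Y Ny B x y * V2 (poly2_dy k) X Nx Y Ny A x y
                                + V2 (poly2 k) X Nx Y Ny A x y * W2 (poly2_dy k) X Nx Y Ny B x y)"
    using integral_add[OF i1 i2] by (simp add: case_prod_unfold)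
  also have "\<dots> = integral {X 0..X Nx} (\<lambda>x. integral {Y 0..Y Ny} (\<lambda>y. W2 (poly2 k) X Nx Y Ny B x y * V2 (poly2_dy k) X Nx Y Ny A x y
                                + V2 (poly2 k) X Nx Y Ny A x y * W2 (poly2_dy k) X Nx Y Ny B x y))"
    using fubini_grid(2)[OF smx smy pF] R by simp
  also have "\<dots> = integral {X 0..X Nx} (\<lambda>x.
     (\<Sum>j<Ny. W2 (poly2 k) X Nx Y Ny B x (Y (Suc j)) * poly2 k (A (pidx X Nx x) j) x (Y (Suc j))
             - W2 (poly2 k) X Nx Y Ny B x (Y j) * poly2 k (A (pidx X Nx x) j) x (Y j))
   + (\<Sum>j<Ny. V2 (poly2 k) X Nx Y Ny A x (per Y Ny (dn Y Ny (Suc j))) * poly2 k (B (didx X Nx x) j) (dsh X Nx x) (dn Y Ny (Suc j))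
             - V2 (poly2 k) X Nx Y Ny A x (per Y Ny (dn Y Ny j)) * poly2 k (B (didx X Nx x) j) (dsh X Nx x) (dn Y Ny j)))"
    by (simp add: yline[OF my])
  also have "\<dots> = (\<Sum>j<Ny. integral {X 0..X Nx} (\<lambda>x. W2 (poly2 k) X Nx Y Ny B x (Y (Suc j)) * poly2 k (A (pidx X Nx x) j) x (Y (Suc j))
             - W2 (poly2 k) X Nx Y Ny B x (Y j) * poly2 k (A (pidx X Nx x) j) x (Y j)))
     + (\<Sum>j<Ny. integral {X 0..X Nx} (\<lambda>x. V2 (poly2 k) X Nx Y Ny A x (per Y Ny (dn Y Ny (Suc j))) * poly2 k (B (didx X Nx x) j) (dsh X Nx x) (dn Y Ny (Suc j))
             - V2 (poly2 k) X Nx Y Ny A x (per Y Ny (dn Y Ny j)) * poly2 k (B (didx X Nx x) j) (dsh X Nx x) (dn Y Ny j)))"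
    (is "integral _ (\<lambda>x. (\<Sum>j<Ny. ?f1 j x) + (\<Sum>j<Ny. ?f3 j x)) = _")
  proof -
    have pf1: "pwc (rm X) (2*Nx) (?f1 j)" for j
      using pwc_rm[OF mx, of "\<lambda>i d z x. poly2 k (B d (didx Y Ny (Y (Suc j)))) z (dsh Y Ny (Y (Suc j))) * poly2 k (A i j) x (Y (Suc j))
             - poly2 k (B d (didx Y Ny (Y j))) z (dsh Y Ny (Y j)) * poly2 k (A i j) x (Y j)"]
      by (simp add: W2_def continuous_intros)
    have pf3: "pwc (rm X) (2*Nx) (?f3 j)" for j
      using pwc_rm[OF mx, of "\<lambda>i d z x. poly2 k (A i (pidx Y Ny (per Y Ny (dn Y Ny (Suc j))))) x (per Y Ny (dn Y Ny (Suc j))) * poly2 k (B d j) z (dn Y Ny (Suc j))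
             - poly2 k (A i (pidx Y Ny (per Y Ny (dn Y Ny j)))) x (per Y Ny (dn Y Ny j)) * poly2 k (B d j) z (dn Y Ny j)"]
      by (simp add: V2_def continuous_intros)
    have if1: "?f1 j integrable_on {X 0..X Nx}" for j using pwc_integrable[OF smx pf1] by simp
    have if3: "?f3 j integrable_on {X 0..X Nx}" for j using pwc_integrable[OF smx pf3] by simp
    show ?thesis
      by (simp add: integral_add integral_sum if1 if3 integrable_sum)
  qed
  also have "\<dots> = (\<Sum>j<Ny. \<Sum>i<Nx. integral {X i..X (Suc i)}
        (\<lambda>x. W2 (poly2 k) X Nx Y Ny B x (Y (Suc j)) * poly2 k (A i j) x (Y (Suc j))
           - W2 (poly2 k) X Nx Y Ny B x (Y j) * poly2 k (A i j) x (Y j)))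
   + (\<Sum>j<Ny. \<Sum>i<Nx. integral {dn X Nx i..dn X Nx (Suc i)}
        (\<lambda>x. V2 (poly2 k) X Nx Y Ny A (per X Nx x) (per Y Ny (dn Y Ny (Suc j))) * poly2 k (B i j) x (dn Y Ny (Suc j))
           - V2 (poly2 k) X Nx Y Ny A (per X Nx x) (per Y Ny (dn Y Ny j)) * poly2 k (B i j) x (dn Y Ny j)))"
  proof -
    have pf1: "pwc (rm X) (2*Nx) (\<lambda>x. W2 (poly2 k) X Nx Y Ny B x (Y (Suc j)) * poly2 k (A (pidx X Nx x) j) x (Y (Suc j))
             - W2 (poly2 k) X Nx Y Ny B x (Y j) * poly2 k (A (pidx X Nx x) j) x (Y j))" for j
      using pwc_rm[OF mx, of "\<lambda>i d z x. poly2 k (B d (didx Y Ny (Y (Suc j)))) z (dsh Y Ny (Y (Suc j))) * poly2 k (A i j) x (Y (Suc j))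
             - poly2 k (B d (didx Y Ny (Y j))) z (dsh Y Ny (Y j)) * poly2 k (A i j) x (Y j)"]
      by (simp add: W2_def continuous_intros)
    have pf3: "pwc (rm X) (2*Nx) (\<lambda>x. V2 (poly2 k) X Nx Y Ny A x (per Y Ny (dn Y Ny (Suc j))) * poly2 k (B (didx X Nx x) j) (dsh X Nx x) (dn Y Ny (Suc j))
             - V2 (poly2 k) X Nx Y Ny A x (per Y Ny (dn Y Ny j)) * poly2 k (B (didx X Nx x) j) (dsh X Nx x) (dn Y Ny j))" for j
      using pwc_rm[OF mx, of "\<lambda>i d z x. poly2 k (A i (pidx Y Ny (per Y Ny (dn Y Ny (Suc j))))) x (per Y Ny (dn Y Ny (Suc j))) * poly2 k (B d j) z (dn Y Ny (Suc j))
             - poly2 k (A i (pidx Y Ny (per Y Ny (dn Y Ny j)))) x (per Y Ny (dn Y Ny j)) * poly2 k (B d j) z (dn Y Ny j)"]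
      by (simp add: V2_def continuous_intros)
    have e1: "integral {X 0..X Nx} (\<lambda>x. W2 (poly2 k) X Nx Y Ny B x (Y (Suc j)) * poly2 k (A (pidx X Nx x) j) x (Y (Suc j))
             - W2 (poly2 k) X Nx Y Ny B x (Y j) * poly2 k (A (pidx X Nx x) j) x (Y j))
       = (\<Sum>i<Nx. integral {X i..X (Suc i)}
        (\<lambda>x. W2 (poly2 k) X Nx Y Ny B x (Y (Suc j)) * poly2 k (A i j) x (Y (Suc j))
           - W2 (poly2 k) X Nx Y Ny B x (Y j) * poly2 k (A i j) x (Y j)))" for j
    proof (rule O1[OF mx pf1])
      fix i x assume "i < Nx" "X i < x" "x < cc X i"
      then show "W2 (poly2 k) X Nx Y Ny B x (Y (Suc j)) * poly2 k (A i j) x (Y (Suc j))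
           - W2 (poly2 k) X Nx Y Ny B x (Y j) * poly2 k (A i j) x (Y j) =
         W2 (poly2 k) X Nx Y Ny B x (Y (Suc j)) * poly2 k (A (pidx X Nx x) j) x (Y (Suc j))
             - W2 (poly2 k) X Nx Y Ny B x (Y j) * poly2 k (A (pidx X Nx x) j) x (Y j)"
        using pidx_mid[OF mx, of i x] cc_bounds[OF mx, of i] by simp
    next
      fix i x assume "i < Nx" "cc X i < x" "x < X (Suc i)"
      then show "W2 (poly2 k) X Nx Y Ny B x (Y (Suc j)) * poly2 k (A i j) x (Y (Suc j))
           - W2 (poly2 k) X Nx Y Ny B x (Y j) * poly2 k (A i j) x (Y j) =
         W2 (poly2 k) X Nx Y Ny B x (Y (Suc j)) * poly2 k (A (pidx X Nx x) j) x (Y (Suc j))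
             - W2 (poly2 k) X Nx Y Ny B x (Y j) * poly2 k (A (pidx X Nx x) j) x (Y j)"
        using pidx_mid[OF mx, of i x] cc_bounds[OF mx, of i] by simp
    qed
    have e3: "integral {X 0..X Nx} (\<lambda>x. V2 (poly2 k) X Nx Y Ny A x (per Y Ny (dn Y Ny (Suc j))) * poly2 k (B (didx X Nx x) j) (dsh X Nx x) (dn Y Ny (Suc j))
             - V2 (poly2 k) X Nx Y Ny A x (per Y Ny (dn Y Ny j)) * poly2 k (B (didx X Nx x) j) (dsh X Nx x) (dn Y Ny j))
       = (\<Sum>i<Nx. integral {dn X Nx i..dn X Nx (Suc i)}
        (\<lambda>x. V2 (poly2 k) X Nx Y Ny A (per X Nx x) (per Y Ny (dn Y Ny (Suc j))) * poly2 k (B i j) x (dn Y Ny (Suc j))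
           - V2 (poly2 k) X Nx Y Ny A (per X Nx x) (per Y Ny (dn Y Ny j)) * poly2 k (B i j) x (dn Y Ny j)))" for j
    proof (rule O2[OF mx pf3])
      fix i x assume "i < Nx" "cc X i < x" "x < X (Suc i)"
      then show "V2 (poly2 k) X Nx Y Ny A (per X Nx x) (per Y Ny (dn Y Ny (Suc j))) * poly2 k (B i j) x (dn Y Ny (Suc j))
           - V2 (poly2 k) X Nx Y Ny A (per X Nx x) (per Y Ny (dn Y Ny j)) * poly2 k (B i j) x (dn Y Ny j) =
        V2 (poly2 k) X Nx Y Ny A x (per Y Ny (dn Y Ny (Suc j))) * poly2 k (B (didx X Nx x) j) (dsh X Nx x) (dn Y Ny (Suc j))
             - V2 (poly2 k) X Nx Y Ny A x (per Y Ny (dn Y Ny j)) * poly2 k (B (didx X Nx x) j) (dsh X Nx x) (dn Y Ny j)"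
        using didx_mid1[OF mx, of i x] by simp
    next
      fix i x assume "Suc i < Nx" "X (Suc i) < x" "x < cc X (Suc i)"
      then show "V2 (poly2 k) X Nx Y Ny A (per X Nx x) (per Y Ny (dn Y Ny (Suc j))) * poly2 k (B i j) x (dn Y Ny (Suc j))
           - V2 (poly2 k) X Nx Y Ny A (per X Nx x) (per Y Ny (dn Y Ny j)) * poly2 k (B i j) x (dn Y Ny j) =
        V2 (poly2 k) X Nx Y Ny A x (per Y Ny (dn Y Ny (Suc j))) * poly2 k (B (didx X Nx x) j) (dsh X Nx x) (dn Y Ny (Suc j))
             - V2 (poly2 k) X Nx Y Ny A x (per Y Ny (dn Y Ny j)) * poly2 k (B (didx X Nx x) j) (dsh X Nx x) (dn Y Ny j)"
        using didx_mid2[OF mx, of i x] by simp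
    next
      fix x assume "X Nx < x" "x < cc X 0 + (X Nx - X 0)"
      then show "V2 (poly2 k) X Nx Y Ny A (per X Nx x) (per Y Ny (dn Y Ny (Suc j))) * poly2 k (B (Nx - 1) j) x (dn Y Ny (Suc j))
           - V2 (poly2 k) X Nx Y Ny A (per X Nx x) (per Y Ny (dn Y Ny j)) * poly2 k (B (Nx - 1) j) x (dn Y Ny j) =
        V2 (poly2 k) X Nx Y Ny A (x - (X Nx - X 0)) (per Y Ny (dn Y Ny (Suc j))) * poly2 k (B (didx X Nx (x - (X Nx - X 0))) j) (dsh X Nx (x - (X Nx - X 0))) (dn Y Ny (Suc j))
             - V2 (poly2 k) X Nx Y Ny A (x - (X Nx - X 0)) (per Y Ny (dn Y Ny j)) * poly2 k (B (didx X Nx (x - (X Nx - X 0))) j) (dsh X Nx (x - (X Nx - X 0))) (dn Y Ny j)"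
        using didx_wrap2[OF mx, of x] by simp
    qed
    show ?thesis by (simp only: e1 e3)
  qed
  also have "\<dots> = (\<Sum>i<Nx. \<Sum>j<Ny. integral {X i..X (Suc i)}
        (\<lambda>x. W2 (poly2 k) X Nx Y Ny B x (Y (Suc j)) * poly2 k (A i j) x (Y (Suc j))
           - W2 (poly2 k) X Nx Y Ny B x (Y j) * poly2 k (A i j) x (Y j)))
   + (\<Sum>i<Nx. \<Sum>j<Ny. integral {dn X Nx i..dn X Nx (Suc i)}
        (\<lambda>x. V2 (poly2 k) X Nx Y Ny A (per X Nx x) (per Y Ny (dn Y Ny (Suc j))) * poly2 k (B i j) x (dn Y Ny (Suc j))
           - V2 (poly2 k) X Nx Y Ny A (per X Nx x) (per Y Ny (dn Y Ny j)) * poly2 k (B i j) x (dn Y Ny j)))"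
    by (simp only: sum.swap[of _ "{..<Ny}"])
  finally show "integral ?R (\<lambda>(x, y). W2 (poly2 k) X Nx Y Ny B x y * V2 (poly2_dy k) X Nx Y Ny A x y)
   + integral ?R (\<lambda>(x, y). V2 (poly2 k) X Nx Y Ny A x y * W2 (poly2_dy k) X Nx Y Ny B x y)
   = (\<Sum>i<Nx. \<Sum>j<Ny. integral {X i..X (Suc i)}
        (\<lambda>x. W2 (poly2 k) X Nx Y Ny B x (Y (Suc j)) * poly2 k (A i j) x (Y (Suc j))
           - W2 (poly2 k) X Nx Y Ny B x (Y j) * poly2 k (A i j) x (Y j)))
   + (\<Sum>i<Nx. \<Sum>j<Ny. integral {dn X Nx i..dn X Nx (Suc i)}
        (\<lambda>x. V2 (poly2 k) X Nx Y Ny A (per X Nx x) (per Y Ny (dn Y Ny (Suc j))) * poly2 k (B i j) x (dn Y Ny (Suc j))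
           - V2 (poly2 k) X Nx Y Ny A (per X Nx x) (per Y Ny (dn Y Ny j)) * poly2 k (B i j) x (dn Y Ny j)))" .
qed

lemma xpart:
  assumes mx: "mesh X Nx" and my: "mesh Y Ny"
  shows "(\<lambda>(x, y). W2 (poly2 k) X Nx Y Ny B x y * V2 (poly2_dx k) X Nx Y Ny A x y) integrable_on ({X 0..X Nx} \<times> {Y 0..Y Ny})"
    "(\<lambda>(x, y). V2 (poly2 k) X Nx Y Ny A x y * W2 (poly2_dx k) X Nx Y Ny B x y) integrable_on ({X 0..X Nx} \<times> {Y 0..Y Ny})"
    "integral ({X 0..X Nx} \<times> {Y 0..Y Ny}) (\<lambda>(x, y). W2 (poly2 k) X Nx Y Ny B x y * V2 (poly2_dx k) X Nx Y Ny A x y)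
   + integral ({X 0..X Nx} \<times> {Y 0..Y Ny}) (\<lambda>(x, y). V2 (poly2 k) X Nx Y Ny A x y * W2 (poly2_dx k) X Nx Y Ny B x y)
   = (\<Sum>i<Nx. \<Sum>j<Ny. integral {Y j..Y (Suc j)}
        (\<lambda>y. W2 (poly2 k) X Nx Y Ny B (X (Suc i)) y * poly2 k (A i j) (X (Suc i)) y
           - W2 (poly2 k) X Nx Y Ny B (X i) y * poly2 k (A i j) (X i) y))
   + (\<Sum>i<Nx. \<Sum>j<Ny. integral {dn Y Ny j..dn Y Ny (Suc j)}
        (\<lambda>y. V2 (poly2 k) X Nx Y Ny A (per X Nx (dn X Nx (Suc i))) (per Y Ny y) * poly2 k (B i j) (dn X Nx (Suc i)) y
           - V2 (poly2 k) X Nx Y Ny A (per X Nx (dn X Nx i)) (per Y Ny y) * poly2 k (B i j) (dn X Nx i) y))"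
proof -
  let ?R = "{X 0..X Nx} \<times> {Y 0..Y Ny}"
  have R: "?R = cbox (rm X 0, rm Y 0) (rm X (2*Nx), rm Y (2*Ny))" by (simp add: cbox_Pair_eq)
  note smx = rm_mono[OF mx] and smy = rm_mono[OF my]
  have pF1: "pwc2 (rm X) (2*Nx) (rm Y) (2*Ny) (\<lambda>(x, y). W2 (poly2 k) X Nx Y Ny B x y * V2 (poly2_dx k) X Nx Y Ny A x y)"
    using pwc2_rm[OF mx my, of "\<lambda>i d z i' d' z' x y. poly2 k (B d d') z z' * poly2_dx k (A i i') x y"]
    by (simp add: V2_def W2_def continuous_intros)
  have pF2: "pwc2 (rm X) (2*Nx) (rm Y) (2*Ny) (\<lambda>(x, y). V2 (poly2 k) X Nx Y Ny A x y * W2 (poly2_dx k) X Nx Y Ny B x y)"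
    using pwc2_rm[OF mx my, of "\<lambda>i d z i' d' z' x y. poly2 k (A i i') x y * poly2_dx k (B d d') z z'"]
    by (simp add: V2_def W2_def continuous_intros)
  have pF: "pwc2 (rm X) (2*Nx) (rm Y) (2*Ny) (\<lambda>(x, y). W2 (poly2 k) X Nx Y Ny B x y * V2 (poly2_dx k) X Nx Y Ny A x y
                                + V2 (poly2 k) X Nx Y Ny A x y * W2 (poly2_dx k) X Nx Y Ny B x y)"
    using pwc2_rm[OF mx my, of "\<lambda>i d z i' d' z' x y. poly2 k (B d d') z z' * poly2_dx k (A i i') x y + poly2 k (A i i') x y * poly2_dx k (B d d') z z'"]
    by (simp add: V2_def W2_def continuous_intros)
  show i1: "(\<lambda>(x, y). W2 (poly2 k) X Nx Y Ny B x y * V2 (poly2_dx k) X Nx Y Ny A x y) integrable_on ?R"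
    using fubini_grid(1)[OF smx smy pF1] R by simp
  show i2: "(\<lambda>(x, y). V2 (poly2 k) X Nx Y Ny A x y * W2 (poly2_dx k) X Nx Y Ny B x y) integrable_on ?R"
    using fubini_grid(1)[OF smx smy pF2] R by simp
  have "integral ?R (\<lambda>(x, y). W2 (poly2 k) X Nx Y Ny B x y * V2 (poly2_dx k) X Nx Y Ny A x y)
   + integral ?R (\<lambda>(x, y). V2 (poly2 k) X Nx Y Ny A x y * W2 (poly2_dx k) X Nx Y Ny B x y)
   = integral ?R (\<lambda>(x, y). W2 (poly2 k) X Nx Y Ny B x y * V2 (poly2_dx k) X Nx Y Ny A x y
                                + V2 (poly2 k) X Nx Y Ny A x y * W2 (poly2_dx k) X Nx Y Ny B x y)"
    using integral_add[OF i1 i2] by (simp add: case_prod_unfold)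
  also have "\<dots> = integral {Y 0..Y Ny} (\<lambda>y. integral {X 0..X Nx} (\<lambda>x. W2 (poly2 k) X Nx Y Ny B x y * V2 (poly2_dx k) X Nx Y Ny A x y
                                + V2 (poly2 k) X Nx Y Ny A x y * W2 (poly2_dx k) X Nx Y Ny B x y))"
    using fubini_grid(3)[OF smx smy pF] R by simp
  also have "\<dots> = integral {Y 0..Y Ny} (\<lambda>y.
     (\<Sum>i<Nx. W2 (poly2 k) X Nx Y Ny B (X (Suc i)) y * poly2 k (A i (pidx Y Ny y)) (X (Suc i)) y
             - W2 (poly2 k) X Nx Y Ny B (X i) y * poly2 k (A i (pidx Y Ny y)) (X i) y)
   + (\<Sum>i<Nx. V2 (poly2 k) X Nx Y Ny A (per X Nx (dn X Nx (Suc i))) y * poly2 k (B i (didx Y Ny y)) (dn X Nx (Suc i)) (dsh Y Ny y)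
             - V2 (poly2 k) X Nx Y Ny A (per X Nx (dn X Nx i)) y * poly2 k (B i (didx Y Ny y)) (dn X Nx i) (dsh Y Ny y)))"
    by (simp add: xline[OF mx])
  also have "\<dots> = (\<Sum>i<Nx. integral {Y 0..Y Ny} (\<lambda>y. W2 (poly2 k) X Nx Y Ny B (X (Suc i)) y * poly2 k (A i (pidx Y Ny y)) (X (Suc i)) y
             - W2 (poly2 k) X Nx Y Ny B (X i) y * poly2 k (A i (pidx Y Ny y)) (X i) y))
     + (\<Sum>i<Nx. integral {Y 0..Y Ny} (\<lambda>y. V2 (poly2 k) X Nx Y Ny A (per X Nx (dn X Nx (Suc i))) y * poly2 k (B i (didx Y Ny y)) (dn X Nx (Suc i)) (dsh Y Ny y)
             - V2 (poly2 k) X Nx Y Ny A (per X Nx (dn X Nx i)) y * poly2 k (B i (didx Y Ny y)) (dn X Nx i) (dsh Y Ny y)))"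
    (is "integral _ (\<lambda>y. (\<Sum>i<Nx. ?f1 i y) + (\<Sum>i<Nx. ?f3 i y)) = _")
  proof -
    have pf1: "pwc (rm Y) (2*Ny) (?f1 i)" for i
      using pwc_rm[OF my, of "\<lambda>j d z y. poly2 k (B (didx X Nx (X (Suc i))) d) (dsh X Nx (X (Suc i))) z * poly2 k (A i j) (X (Suc i)) y
             - poly2 k (B (didx X Nx (X i)) d) (dsh X Nx (X i)) z * poly2 k (A i j) (X i) y"]
      by (simp add: W2_def continuous_intros)
    have pf3: "pwc (rm Y) (2*Ny) (?f3 i)" for i
      using pwc_rm[OF my, of "\<lambda>j d z y. poly2 k (A (pidx X Nx (per X Nx (dn X Nx (Suc i)))) j) (per X Nx (dn X Nx (Suc i))) y * poly2 k (B i d) (dn X Nx (Suc i)) z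
             - poly2 k (A (pidx X Nx (per X Nx (dn X Nx i))) j) (per X Nx (dn X Nx i)) y * poly2 k (B i d) (dn X Nx i) z"]
      by (simp add: V2_def continuous_intros)
    have if1: "?f1 i integrable_on {Y 0..Y Ny}" for i using pwc_integrable[OF smy pf1] by simp
    have if3: "?f3 i integrable_on {Y 0..Y Ny}" for i using pwc_integrable[OF smy pf3] by simp
    show ?thesis
      by (simp add: integral_add integral_sum if1 if3 integrable_sum)
  qed
  also have "\<dots> = (\<Sum>i<Nx. \<Sum>j<Ny. integral {Y j..Y (Suc j)}
        (\<lambda>y. W2 (poly2 k) X Nx Y Ny B (X (Suc i)) y * poly2 k (A i j) (X (Suc i)) y
           - W2 (poly2 k) X Nx Y Ny B (X i) y * poly2 k (A i j) (X i) y))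
   + (\<Sum>i<Nx. \<Sum>j<Ny. integral {dn Y Ny j..dn Y Ny (Suc j)}
        (\<lambda>y. V2 (poly2 k) X Nx Y Ny A (per X Nx (dn X Nx (Suc i))) (per Y Ny y) * poly2 k (B i j) (dn X Nx (Suc i)) y
           - V2 (poly2 k) X Nx Y Ny A (per X Nx (dn X Nx i)) (per Y Ny y) * poly2 k (B i j) (dn X Nx i) y))"
  proof -
    have pf1: "pwc (rm Y) (2*Ny) (\<lambda>y. W2 (poly2 k) X Nx Y Ny B (X (Suc i)) y * poly2 k (A i (pidx Y Ny y)) (X (Suc i)) y
             - W2 (poly2 k) X Nx Y Ny B (X i) y * poly2 k (A i (pidx Y Ny y)) (X i) y)" for i
      using pwc_rm[OF my, of "\<lambda>j d z y. poly2 k (B (didx X Nx (X (Suc i))) d) (dsh X Nx (X (Suc i))) z * poly2 k (A i j) (X (Suc i)) y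
             - poly2 k (B (didx X Nx (X i)) d) (dsh X Nx (X i)) z * poly2 k (A i j) (X i) y"]
      by (simp add: W2_def continuous_intros)
    have pf3: "pwc (rm Y) (2*Ny) (\<lambda>y. V2 (poly2 k) X Nx Y Ny A (per X Nx (dn X Nx (Suc i))) y * poly2 k (B i (didx Y Ny y)) (dn X Nx (Suc i)) (dsh Y Ny y)
             - V2 (poly2 k) X Nx Y Ny A (per X Nx (dn X Nx i)) y * poly2 k (B i (didx Y Ny y)) (dn X Nx i) (dsh Y Ny y))" for i
      using pwc_rm[OF my, of "\<lambda>j d z y. poly2 k (A (pidx X Nx (per X Nx (dn X Nx (Suc i)))) j) (per X Nx (dn X Nx (Suc i))) y * poly2 k (B i d) (dn X Nx (Suc i)) z
             - poly2 k (A (pidx X Nx (per X Nx (dn X Nx i))) j) (per X Nx (dn X Nx i)) y * poly2 k (B i d) (dn X Nx i) z"]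
      by (simp add: V2_def continuous_intros)
    have e1: "integral {Y 0..Y Ny} (\<lambda>y. W2 (poly2 k) X Nx Y Ny B (X (Suc i)) y * poly2 k (A i (pidx Y Ny y)) (X (Suc i)) y
             - W2 (poly2 k) X Nx Y Ny B (X i) y * poly2 k (A i (pidx Y Ny y)) (X i) y)
       = (\<Sum>j<Ny. integral {Y j..Y (Suc j)}
        (\<lambda>y. W2 (poly2 k) X Nx Y Ny B (X (Suc i)) y * poly2 k (A i j) (X (Suc i)) y
           - W2 (poly2 k) X Nx Y Ny B (X i) y * poly2 k (A i j) (X i) y))" for i
    proof (rule O1[OF my pf1])
      fix j y assume "j < Ny" "Y j < y" "y < cc Y j"
      then show "W2 (poly2 k) X Nx Y Ny B (X (Suc i)) y * poly2 k (A i j) (X (Suc i)) y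
           - W2 (poly2 k) X Nx Y Ny B (X i) y * poly2 k (A i j) (X i) y =
         W2 (poly2 k) X Nx Y Ny B (X (Suc i)) y * poly2 k (A i (pidx Y Ny y)) (X (Suc i)) y
             - W2 (poly2 k) X Nx Y Ny B (X i) y * poly2 k (A i (pidx Y Ny y)) (X i) y"
        using pidx_mid[OF my, of j y] cc_bounds[OF my, of j] by simp
    next
      fix j y assume "j < Ny" "cc Y j < y" "y < Y (Suc j)"
      then show "W2 (poly2 k) X Nx Y Ny B (X (Suc i)) y * poly2 k (A i j) (X (Suc i)) y
           - W2 (poly2 k) X Nx Y Ny B (X i) y * poly2 k (A i j) (X i) y =
         W2 (poly2 k) X Nx Y Ny B (X (Suc i)) y * poly2 k (A i (pidx Y Ny y)) (X (Suc i)) y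
             - W2 (poly2 k) X Nx Y Ny B (X i) y * poly2 k (A i (pidx Y Ny y)) (X i) y"
        using pidx_mid[OF my, of j y] cc_bounds[OF my, of j] by simp
    qed
    have e3: "integral {Y 0..Y Ny} (\<lambda>y. V2 (poly2 k) X Nx Y Ny A (per X Nx (dn X Nx (Suc i))) y * poly2 k (B i (didx Y Ny y)) (dn X Nx (Suc i)) (dsh Y Ny y)
             - V2 (poly2 k) X Nx Y Ny A (per X Nx (dn X Nx i)) y * poly2 k (B i (didx Y Ny y)) (dn X Nx i) (dsh Y Ny y))
       = (\<Sum>j<Ny. integral {dn Y Ny j..dn Y Ny (Suc j)}
        (\<lambda>y. V2 (poly2 k) X Nx Y Ny A (per X Nx (dn X Nx (Suc i))) (per Y Ny y) * poly2 k (B i j) (dn X Nx (Suc i)) y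
           - V2 (poly2 k) X Nx Y Ny A (per X Nx (dn X Nx i)) (per Y Ny y) * poly2 k (B i j) (dn X Nx i) y))" for i
    proof (rule O2[OF my pf3])
      fix j y assume "j < Ny" "cc Y j < y" "y < Y (Suc j)"
      then show "V2 (poly2 k) X Nx Y Ny A (per X Nx (dn X Nx (Suc i))) (per Y Ny y) * poly2 k (B i j) (dn X Nx (Suc i)) y
           - V2 (poly2 k) X Nx Y Ny A (per X Nx (dn X Nx i)) (per Y Ny y) * poly2 k (B i j) (dn X Nx i) y =
        V2 (poly2 k) X Nx Y Ny A (per X Nx (dn X Nx (Suc i))) y * poly2 k (B i (didx Y Ny y)) (dn X Nx (Suc i)) (dsh Y Ny y)
             - V2 (poly2 k) X Nx Y Ny A (per X Nx (dn X Nx i)) y * poly2 k (B i (didx Y Ny y)) (dn X Nx i) (dsh Y Ny y)"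
        using didx_mid1[OF my, of j y] by simp
    next
      fix j y assume "Suc j < Ny" "Y (Suc j) < y" "y < cc Y (Suc j)"
      then show "V2 (poly2 k) X Nx Y Ny A (per X Nx (dn X Nx (Suc i))) (per Y Ny y) * poly2 k (B i j) (dn X Nx (Suc i)) y
           - V2 (poly2 k) X Nx Y Ny A (per X Nx (dn X Nx i)) (per Y Ny y) * poly2 k (B i j) (dn X Nx i) y =
        V2 (poly2 k) X Nx Y Ny A (per X Nx (dn X Nx (Suc i))) y * poly2 k (B i (didx Y Ny y)) (dn X Nx (Suc i)) (dsh Y Ny y)
             - V2 (poly2 k) X Nx Y Ny A (per X Nx (dn X Nx i)) y * poly2 k (B i (didx Y Ny y)) (dn X Nx i) (dsh Y Ny y)"
        using didx_mid2[OF my, of j y] by simp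
    next
      fix y assume "Y Ny < y" "y < cc Y 0 + (Y Ny - Y 0)"
      then show "V2 (poly2 k) X Nx Y Ny A (per X Nx (dn X Nx (Suc i))) (per Y Ny y) * poly2 k (B i (Ny - 1)) (dn X Nx (Suc i)) y
           - V2 (poly2 k) X Nx Y Ny A (per X Nx (dn X Nx i)) (per Y Ny y) * poly2 k (B i (Ny - 1)) (dn X Nx i) y =
        V2 (poly2 k) X Nx Y Ny A (per X Nx (dn X Nx (Suc i))) (y - (Y Ny - Y 0)) * poly2 k (B i (didx Y Ny (y - (Y Ny - Y 0)))) (dn X Nx (Suc i)) (dsh Y Ny (y - (Y Ny - Y 0)))
             - V2 (poly2 k) X Nx Y Ny A (per X Nx (dn X Nx i)) (y - (Y Ny - Y 0)) * poly2 k (B i (didx Y Ny (y - (Y Ny - Y 0)))) (dn X Nx i) (dsh Y Ny (y - (Y Ny - Y 0)))"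
        using didx_wrap2[OF my, of y] by simp
    qed
    show ?thesis by (simp only: e1 e3)
  qed
  finally show "integral ?R (\<lambda>(x, y). W2 (poly2 k) X Nx Y Ny B x y * V2 (poly2_dx k) X Nx Y Ny A x y)
   + integral ?R (\<lambda>(x, y). V2 (poly2 k) X Nx Y Ny A x y * W2 (poly2_dx k) X Nx Y Ny B x y)
   = (\<Sum>i<Nx. \<Sum>j<Ny. integral {Y j..Y (Suc j)}
        (\<lambda>y. W2 (poly2 k) X Nx Y Ny B (X (Suc i)) y * poly2 k (A i j) (X (Suc i)) y
           - W2 (poly2 k) X Nx Y Ny B (X i) y * poly2 k (A i j) (X i) y))
   + (\<Sum>i<Nx. \<Sum>j<Ny. integral {dn Y Ny j..dn Y Ny (Suc j)}
        (\<lambda>y. V2 (poly2 k) X Nx Y Ny A (per X Nx (dn X Nx (Suc i))) (per Y Ny y) * poly2 k (B i j) (dn X Nx (Suc i)) y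
           - V2 (poly2 k) X Nx Y Ny A (per X Nx (dn X Nx i)) (per Y Ny y) * poly2 k (B i j) (dn X Nx i) y))" .
qed

lemma int_factor: "integral S (\<lambda>x. (c::real) * f x * g x - c * f' x * g' x) = c * integral S (\<lambda>x. f x * g x - f' x * g' x)"
proof -
  have "(\<lambda>x. c * f x * g x - c * f' x * g' x) = (\<lambda>x. c * (f x * g x - f' x * g' x))" by (auto simp: algebra_simps)
  then show ?thesis by simp
qed

definition "EE1 k X Nx Y Ny B A = (\<Sum>i<Nx. \<Sum>j<Ny. integral {X i..X (Suc i)}
        (\<lambda>x. W2 (poly2 k) X Nx Y Ny B x (Y (Suc j)) * poly2 k (A i j) x (Y (Suc j))
           - W2 (poly2 k) X Nx Y Ny B x (Y j) * poly2 k (A i j) x (Y j)))"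
definition "EE3 k X Nx Y Ny A B = (\<Sum>i<Nx. \<Sum>j<Ny. integral {dn X Nx i..dn X Nx (Suc i)}
        (\<lambda>x. V2 (poly2 k) X Nx Y Ny A (per X Nx x) (per Y Ny (dn Y Ny (Suc j))) * poly2 k (B i j) x (dn Y Ny (Suc j))
           - V2 (poly2 k) X Nx Y Ny A (per X Nx x) (per Y Ny (dn Y Ny j)) * poly2 k (B i j) x (dn Y Ny j)))"
definition "EE2 k X Nx Y Ny B A = (\<Sum>i<Nx. \<Sum>j<Ny. integral {Y j..Y (Suc j)}
        (\<lambda>y. W2 (poly2 k) X Nx Y Ny B (X (Suc i)) y * poly2 k (A i j) (X (Suc i)) y
           - W2 (poly2 k) X Nx Y Ny B (X i) y * poly2 k (A i j) (X i) y))"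
definition "EE4 k X Nx Y Ny A B = (\<Sum>i<Nx. \<Sum>j<Ny. integral {dn Y Ny j..dn Y Ny (Suc j)}
        (\<lambda>y. V2 (poly2 k) X Nx Y Ny A (per X Nx (dn X Nx (Suc i))) (per Y Ny y) * poly2 k (B i j) (dn X Nx (Suc i)) y
           - V2 (poly2 k) X Nx Y Ny A (per X Nx (dn X Nx i)) (per Y Ny y) * poly2 k (B i j) (dn X Nx i) y))"

definition "XX1 k X Nx Y Ny B A = integral ({X 0..X Nx} \<times> {Y 0..Y Ny}) (\<lambda>(x, y). W2 (poly2 k) X Nx Y Ny B x y * V2 (poly2_dx k) X Nx Y Ny A x y)"
definition "XX2 k X Nx Y Ny A B = integral ({X 0..X Nx} \<times> {Y 0..Y Ny}) (\<lambda>(x, y). V2 (poly2 k) X Nx Y Ny A x y * W2 (poly2_dx k) X Nx Y Ny B x y)"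
definition "YY1 k X Nx Y Ny B A = integral ({X 0..X Nx} \<times> {Y 0..Y Ny}) (\<lambda>(x, y). W2 (poly2 k) X Nx Y Ny B x y * V2 (poly2_dy k) X Nx Y Ny A x y)"
definition "YY2 k X Nx Y Ny A B = integral ({X 0..X Nx} \<times> {Y 0..Y Ny}) (\<lambda>(x, y). V2 (poly2 k) X Nx Y Ny A x y * W2 (poly2_dy k) X Nx Y Ny B x y)"

lemma edges:
  "(\<Sum>i<Nx. \<Sum>j<Ny.
          integral {X i..X (Suc i)}
            (\<lambda>x. \<beta>2 * W2 (poly2 k) X Nx Y Ny u2 x (Y (Suc j)) * poly2 k (\<phi>1 i j) x (Y (Suc j))
                - \<beta>2 * W2 (poly2 k) X Nx Y Ny u2 x (Y j) * poly2 k (\<phi>1 i j) x (Y j))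
        + integral {Y j..Y (Suc j)}
            (\<lambda>y. \<beta>1 * W2 (poly2 k) X Nx Y Ny u2 (X (Suc i)) y * poly2 k (\<phi>1 i j) (X (Suc i)) y
                - \<beta>1 * W2 (poly2 k) X Nx Y Ny u2 (X i) y * poly2 k (\<phi>1 i j) (X i) y)
        + integral {dn X Nx i..dn X Nx (Suc i)}
            (\<lambda>x. \<beta>2 * V2 (poly2 k) X Nx Y Ny u1 (per X Nx x) (per Y Ny (dn Y Ny (Suc j))) * poly2 k (\<phi>2 i j) x (dn Y Ny (Suc j))
                - \<beta>2 * V2 (poly2 k) X Nx Y Ny u1 (per X Nx x) (per Y Ny (dn Y Ny j)) * poly2 k (\<phi>2 i j) x (dn Y Ny j))
        + integral {dn Y Ny j..dn Y Ny (Suc j)}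
            (\<lambda>y. \<beta>1 * V2 (poly2 k) X Nx Y Ny u1 (per X Nx (dn X Nx (Suc i))) (per Y Ny y) * poly2 k (\<phi>2 i j) (dn X Nx (Suc i)) y
                - \<beta>1 * V2 (poly2 k) X Nx Y Ny u1 (per X Nx (dn X Nx i)) (per Y Ny y) * poly2 k (\<phi>2 i j) (dn X Nx i) y))
  = \<beta>2 * EE1 k X Nx Y Ny u2 \<phi>1 + \<beta>1 * EE2 k X Nx Y Ny u2 \<phi>1 + \<beta>2 * EE3 k X Nx Y Ny u1 \<phi>2 + \<beta>1 * EE4 k X Nx Y Ny u1 \<phi>2"
  unfolding EE1_def EE2_def EE3_def EE4_def int_factor
  by (simp add: sum_distrib_left sum.distrib)

lemma vol:
  assumes mx: "mesh X Nx" and my: "mesh Y Ny"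
  shows "integral ({X 0..X Nx} \<times> {Y 0..Y Ny})
         (\<lambda>(x, y). \<beta>1 * W2 (poly2 k) X Nx Y Ny u2 x y * V2 (poly2_dx k) X Nx Y Ny \<phi>1 x y
                 + \<beta>2 * W2 (poly2 k) X Nx Y Ny u2 x y * V2 (poly2_dy k) X Nx Y Ny \<phi>1 x y
                 + \<beta>1 * V2 (poly2 k) X Nx Y Ny u1 x y * W2 (poly2_dx k) X Nx Y Ny \<phi>2 x y
                 + \<beta>2 * V2 (poly2 k) X Nx Y Ny u1 x y * W2 (poly2_dy k) X Nx Y Ny \<phi>2 x y)
   = \<beta>1 * XX1 k X Nx Y Ny u2 \<phi>1 + \<beta>2 * YY1 k X Nx Y Ny u2 \<phi>1 + \<beta>1 * XX2 k X Nx Y Ny u1 \<phi>2 + \<beta>2 * YY2 k X Nx Y Ny u1 \<phi>2"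
proof -
  let ?R = "{X 0..X Nx} \<times> {Y 0..Y Ny}"
  let ?f1 = "\<lambda>(x, y). W2 (poly2 k) X Nx Y Ny u2 x y * V2 (poly2_dx k) X Nx Y Ny \<phi>1 x y"
  let ?f2 = "\<lambda>(x, y). W2 (poly2 k) X Nx Y Ny u2 x y * V2 (poly2_dy k) X Nx Y Ny \<phi>1 x y"
  let ?f3 = "\<lambda>(x, y). V2 (poly2 k) X Nx Y Ny u1 x y * W2 (poly2_dx k) X Nx Y Ny \<phi>2 x y"
  let ?f4 = "\<lambda>(x, y). V2 (poly2 k) X Nx Y Ny u1 x y * W2 (poly2_dy k) X Nx Y Ny \<phi>2 x y"
  have i1: "?f1 integrable_on ?R" by (rule xpart(1)[OF mx my])
  have i2: "?f2 integrable_on ?R" by (rule ypart(1)[OF mx my])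
  have i3: "?f3 integrable_on ?R" by (rule xpart(2)[OF mx my])
  have i4: "?f4 integrable_on ?R" by (rule ypart(2)[OF mx my])
  have h: "((\<lambda>p. \<beta>1 * ?f1 p + \<beta>2 * ?f2 p + \<beta>1 * ?f3 p + \<beta>2 * ?f4 p) has_integral
      (\<beta>1 * integral ?R ?f1 + \<beta>2 * integral ?R ?f2 + \<beta>1 * integral ?R ?f3 + \<beta>2 * integral ?R ?f4)) ?R"
    by (intro has_integral_add has_integral_mult_right integrable_integral i1 i2 i3 i4)
  have e: "(\<lambda>p. \<beta>1 * ?f1 p + \<beta>2 * ?f2 p + \<beta>1 * ?f3 p + \<beta>2 * ?f4 p) =
     (\<lambda>(x, y). \<beta>1 * W2 (poly2 k) X Nx Y Ny u2 x y * V2 (poly2_dx k) X Nx Y Ny \<phi>1 x y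
                 + \<beta>2 * W2 (poly2 k) X Nx Y Ny u2 x y * V2 (poly2_dy k) X Nx Y Ny \<phi>1 x y
                 + \<beta>1 * V2 (poly2 k) X Nx Y Ny u1 x y * W2 (poly2_dx k) X Nx Y Ny \<phi>2 x y
                 + \<beta>2 * V2 (poly2 k) X Nx Y Ny u1 x y * W2 (poly2_dy k) X Nx Y Ny \<phi>2 x y)"
    by (auto simp: fun_eq_iff mult.assoc)
  show ?thesis
    using integral_unique[OF h] unfolding e XX1_def XX2_def YY1_def YY2_def by simp
qed

lemma twoD:
  assumes mx: "mesh X Nx" and my: "mesh Y Ny"
  shows "H2 k \<beta>1 \<beta>2 \<tau> X Nx Y Ny (h1, h2) (g1, g2) + H2 k \<beta>1 \<beta>2 \<tau> X Nx Y Ny (g1, g2) (h1, h2)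
     = - (2 / \<tau>) * integral ({X 0..X Nx} \<times> {Y 0..Y Ny})
         (\<lambda>(x, y). (V2 (poly2 k) X Nx Y Ny h1 x y - W2 (poly2 k) X Nx Y Ny h2 x y)
                 * (V2 (poly2 k) X Nx Y Ny g1 x y - W2 (poly2 k) X Nx Y Ny g2 x y))"
proof -
  have H: "H2 k \<beta>1 \<beta>2 \<tau> X Nx Y Ny (u1, u2) (\<phi>1, \<phi>2) =
     - (1 / \<tau>) * integral ({X 0..X Nx} \<times> {Y 0..Y Ny})
         (\<lambda>(x, y). (V2 (poly2 k) X Nx Y Ny u1 x y - W2 (poly2 k) X Nx Y Ny u2 x y)
                 * (V2 (poly2 k) X Nx Y Ny \<phi>1 x y - W2 (poly2 k) X Nx Y Ny \<phi>2 x y))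
     + (\<beta>1 * XX1 k X Nx Y Ny u2 \<phi>1 + \<beta>2 * YY1 k X Nx Y Ny u2 \<phi>1 + \<beta>1 * XX2 k X Nx Y Ny u1 \<phi>2 + \<beta>2 * YY2 k X Nx Y Ny u1 \<phi>2)
     - (\<beta>2 * EE1 k X Nx Y Ny u2 \<phi>1 + \<beta>1 * EE2 k X Nx Y Ny u2 \<phi>1 + \<beta>2 * EE3 k X Nx Y Ny u1 \<phi>2 + \<beta>1 * EE4 k X Nx Y Ny u1 \<phi>2)"
    for u1 u2 \<phi>1 \<phi>2
    unfolding H2_def Let_def prod.case vol[OF mx my, symmetric] edges[symmetric] ..
  have x: "XX1 k X Nx Y Ny B A + XX2 k X Nx Y Ny A B = EE2 k X Nx Y Ny B A + EE4 k X Nx Y Ny A B" for A B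
    using xpart(3)[OF mx my, of k B A] unfolding XX1_def XX2_def EE2_def EE4_def .
  have y: "YY1 k X Nx Y Ny B A + YY2 k X Nx Y Ny A B = EE1 k X Nx Y Ny B A + EE3 k X Nx Y Ny A B" for A B
    using ypart(3)[OF mx my, of k B A] unfolding YY1_def YY2_def EE1_def EE3_def .
  have sym: "integral ({X 0..X Nx} \<times> {Y 0..Y Ny})
         (\<lambda>(x, y). (V2 (poly2 k) X Nx Y Ny g1 x y - W2 (poly2 k) X Nx Y Ny g2 x y)
                 * (V2 (poly2 k) X Nx Y Ny h1 x y - W2 (poly2 k) X Nx Y Ny h2 x y))
     = integral ({X 0..X Nx} \<times> {Y 0..Y Ny})
         (\<lambda>(x, y). (V2 (poly2 k) X Nx Y Ny h1 x y - W2 (poly2 k) X Nx Y Ny h2 x y)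
                 * (V2 (poly2 k) X Nx Y Ny g1 x y - W2 (poly2 k) X Nx Y Ny g2 x y))"
    by (simp add: mult.commute)
  have x1: "\<beta>1 * XX1 k X Nx Y Ny B A + \<beta>1 * XX2 k X Nx Y Ny A B = \<beta>1 * EE2 k X Nx Y Ny B A + \<beta>1 * EE4 k X Nx Y Ny A B" for A B
    using x[of B A] by (simp add: distrib_left[symmetric])
  have y1: "\<beta>2 * YY1 k X Nx Y Ny B A + \<beta>2 * YY2 k X Nx Y Ny A B = \<beta>2 * EE1 k X Nx Y Ny B A + \<beta>2 * EE3 k X Nx Y Ny A B" for A B
    using y[of B A] by (simp add: distrib_left[symmetric])
  show ?thesis
    unfolding H using x1[of h2 g1] x1[of g2 h1] y1[of h2 g1] y1[of g2 h1] sym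
    by (simp add: algebra_simps)
qed

theorem lemma3p1:
  shows "(\<forall>(k::nat) (\<beta>::real) (\<tau>::real) (xb::nat \<Rightarrow> real) (N::nat).
            0 < \<tau> \<and> 1 \<le> N \<and> (\<forall>i<N. xb i < xb (Suc i)) \<longrightarrow>
            (\<forall>h1 h2 g1 g2 :: nat \<Rightarrow> real poly.
               (\<forall>i<N. degree (h1 i) \<le> k \<and> degree (h2 i) \<le> k \<and>
                      degree (g1 i) \<le> k \<and> degree (g2 i) \<le> k) \<longrightarrow>
               H1 \<beta> \<tau> xb N (h1, h2) (g1, g2) + H1 \<beta> \<tau> xb N (g1, g2) (h1, h2)
               = - (2 / \<tau>) * integral {xb 0..xb N}
                   (\<lambda>x. (Vh1 xb N h1 x - Wh1 xb N h2 x) * (Vh1 xb N g1 x - Wh1 xb N g2 x))))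
       \<and>
       (\<forall>(k::nat) (\<beta>1::real) (\<beta>2::real) (\<tau>::real) (xmin::real) xmax ymin ymax (Nx::nat) (Ny::nat).
            0 < \<tau> \<and> xmin < xmax \<and> ymin < ymax \<and> 1 \<le> Nx \<and> 1 \<le> Ny \<longrightarrow>
            (let xb = umesh xmin xmax Nx; yb = umesh ymin ymax Ny in
             \<forall>h1 h2 g1 g2 :: nat \<Rightarrow> nat \<Rightarrow> coeffs.
               H2 k \<beta>1 \<beta>2 \<tau> xb Nx yb Ny (h1, h2) (g1, g2) + H2 k \<beta>1 \<beta>2 \<tau> xb Nx yb Ny (g1, g2) (h1, h2)
               = - (2 / \<tau>) * integral ({xmin..xmax} \<times> {ymin..ymax})
                   (\<lambda>(x, y). (V2 (poly2 k) xb Nx yb Ny h1 x y - W2 (poly2 k) xb Nx yb Ny h2 x y)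
                           * (V2 (poly2 k) xb Nx yb Ny g1 x y - W2 (poly2 k) xb Nx yb Ny g2 x y))))"
  proof (intro conjI)
  show "\<forall>(k::nat) (\<beta>::real) (\<tau>::real) (xb::nat \<Rightarrow> real) (N::nat).
            0 < \<tau> \<and> 1 \<le> N \<and> (\<forall>i<N. xb i < xb (Suc i)) \<longrightarrow>
            (\<forall>h1 h2 g1 g2 :: nat \<Rightarrow> real poly.
               (\<forall>i<N. degree (h1 i) \<le> k \<and> degree (h2 i) \<le> k \<and>
                      degree (g1 i) \<le> k \<and> degree (g2 i) \<le> k) \<longrightarrow>
               H1 \<beta> \<tau> xb N (h1, h2) (g1, g2) + H1 \<beta> \<tau> xb N (g1, g2) (h1, h2)
               = - (2 / \<tau>) * integral {xb 0..xb N}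
                   (\<lambda>x. (Vh1 xb N h1 x - Wh1 xb N h2 x) * (Vh1 xb N g1 x - Wh1 xb N g2 x)))"
    by (intro allI impI) (rule oneD, simp add: mesh_def)
next
  show "\<forall>(k::nat) (\<beta>1::real) (\<beta>2::real) (\<tau>::real) (xmin::real) xmax ymin ymax (Nx::nat) (Ny::nat).
            0 < \<tau> \<and> xmin < xmax \<and> ymin < ymax \<and> 1 \<le> Nx \<and> 1 \<le> Ny \<longrightarrow>
            (let xb = umesh xmin xmax Nx; yb = umesh ymin ymax Ny in
             \<forall>h1 h2 g1 g2 :: nat \<Rightarrow> nat \<Rightarrow> coeffs.
               H2 k \<beta>1 \<beta>2 \<tau> xb Nx yb Ny (h1, h2) (g1, g2) + H2 k \<beta>1 \<beta>2 \<tau> xb Nx yb Ny (g1, g2) (h1, h2)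
               = - (2 / \<tau>) * integral ({xmin..xmax} \<times> {ymin..ymax})
                   (\<lambda>(x, y). (V2 (poly2 k) xb Nx yb Ny h1 x y - W2 (poly2 k) xb Nx yb Ny h2 x y)
                           * (V2 (poly2 k) xb Nx yb Ny g1 x y - W2 (poly2 k) xb Nx yb Ny g2 x y)))"
  proof (intro allI impI)
    fix k :: nat and \<beta>1 \<beta>2 \<tau> xmin xmax ymin ymax :: real and Nx Ny :: nat
    assume a: "0 < \<tau> \<and> xmin < xmax \<and> ymin < ymax \<and> 1 \<le> Nx \<and> 1 \<le> Ny"
    have mx: "mesh (umesh xmin xmax Nx) Nx" using umesh_mesh a by blast
    have my: "mesh (umesh ymin ymax Ny) Ny" using umesh_mesh a by blast
    show "let xb = umesh xmin xmax Nx; yb = umesh ymin ymax Ny in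
             \<forall>h1 h2 g1 g2 :: nat \<Rightarrow> nat \<Rightarrow> coeffs.
               H2 k \<beta>1 \<beta>2 \<tau> xb Nx yb Ny (h1, h2) (g1, g2) + H2 k \<beta>1 \<beta>2 \<tau> xb Nx yb Ny (g1, g2) (h1, h2)
               = - (2 / \<tau>) * integral ({xmin..xmax} \<times> {ymin..ymax})
                   (\<lambda>(x, y). (V2 (poly2 k) xb Nx yb Ny h1 x y - W2 (poly2 k) xb Nx yb Ny h2 x y)
                           * (V2 (poly2 k) xb Nx yb Ny g1 x y - W2 (poly2 k) xb Nx yb Ny g2 x y))"
      unfolding Let_def using twoD[OF mx my] umesh_N a by simp
  qed
qed

end
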